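(* Let $K\ge 3$, $d_2,\dots,d_K\ge 2$, $k\ge 1$ and $d_1=d_2\cdots d_K-k\ge 1$. If $\mathbb{C}^{k}\otimes\mathbb{C}^{d_2}\otimes\cdots\otimes\mathbb{C}^{d_K}$ has only finitely many SLOCC equivalence classes, then $\mathbb{C}^{d_1}\otimes\mathbb{C}^{d_2}\otimes\cdots\otimes\mathbb{C}^{d_K}$ has only finitely many SLOCC equivalence classes of SLOCC maximal states.
   Context: For a multipartite space $\mathbb{C}^{e_1}\otimes\cdots\otimes\mathbb{C}^{e_m}$ with parties the tensor factors, $|\psi\rangle\le_{\mathrm{SLOCC}}|\phi\rangle$ means $(L_1\otimes\cdots\otimes L_m)|\phi\rangle=|\psi\rangle$ for some linear operators $L_i$ on $\mathbb{C}^{e_i}$; two states are SLOCC equivalent if each is $\le_{\mathrm{SLOCC}}$ the other (equivalently, related by $L_1\otimes\cdots\otimes L_m$ with all $L_i$ invertible). A state $|\phi\rangle$ is SLOCC maximal if for every $|\psi\rangle$ in the space, $|\phi\rangle\le_{\mathrm{SLOCC}}|\psi\rangle$ implies $|\psi\rangle\le_{\mathrm{SLOCC}}|\phi\rangle$. *)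

theory Defs
  imports Complex_Main
begin

text \<open>A multipartite space C^{e_1} (x) ... (x) C^{e_m} is described by the list
  e = [e_1, ..., e_m] of local dimensions.\<close>

definition idx :: "nat list \<Rightarrow> (nat \<Rightarrow> nat) set" where
  "idx e = {i. (\<forall>j<length e. i j < e ! j) \<and> (\<forall>j\<ge>length e. i j = 0)}"

definition tspace :: "nat list \<Rightarrow> ((nat \<Rightarrow> nat) \<Rightarrow> complex) set" where
  "tspace e = {T. \<forall>i. i \<notin> idx e \<longrightarrow> T i = 0}"

text \<open>Local operators: L j is the (e!j x e!j) matrix of party j, entries L j a b.
  Applying L_1 (x) ... (x) L_m to T.\<close>
definition apply_local :: "nat list \<Rightarrow> (nat \<Rightarrow> nat \<Rightarrow> nat \<Rightarrow> complex)
    \<Rightarrow> ((nat \<Rightarrow> nat) \<Rightarrow> complex) \<Rightarrow> ((nat \<Rightarrow> nat) \<Rightarrow> complex)" where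
  "apply_local e L T = (\<lambda>i. if i \<in> idx e then
      (\<Sum>i'\<in>idx e. (\<Prod>j<length e. L j (i j) (i' j)) * T i') else 0)"

definition slocc_le :: "nat list \<Rightarrow> ((nat \<Rightarrow> nat) \<Rightarrow> complex) \<Rightarrow> ((nat \<Rightarrow> nat) \<Rightarrow> complex) \<Rightarrow> bool" where
  "slocc_le e psi phi \<longleftrightarrow> (\<exists>L. apply_local e L phi = psi)"

definition slocc_equiv :: "nat list \<Rightarrow> ((nat \<Rightarrow> nat) \<Rightarrow> complex) rel" where
  "slocc_equiv e = {(psi, phi). psi \<in> tspace e \<and> phi \<in> tspace e \<and>
      slocc_le e psi phi \<and> slocc_le e phi psi}"

definition slocc_maximal :: "nat list \<Rightarrow> ((nat \<Rightarrow> nat) \<Rightarrow> complex) \<Rightarrow> bool" where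
  "slocc_maximal e phi \<longleftrightarrow> phi \<in> tspace e \<and>
     (\<forall>psi\<in>tspace e. slocc_le e phi psi \<longrightarrow> slocc_le e psi phi)"

definition finitely_many_classes :: "nat list \<Rightarrow> bool" where
  "finitely_many_classes e \<longleftrightarrow> finite (tspace e // slocc_equiv e)"

definition finitely_many_maximal_classes :: "nat list \<Rightarrow> bool" where
  "finitely_many_maximal_classes e \<longleftrightarrow>
     finite ({phi. slocc_maximal e phi} // slocc_equiv e)"

end

theory Submission
  imports Defs "HOL-Library.Function_Algebras"
begin


definition cns :: "nat \<Rightarrow> (nat \<Rightarrow> nat) \<Rightarrow> (nat \<Rightarrow> nat)" where
  "cns a t = (\<lambda>m. case m of 0 \<Rightarrow> a | Suc m' \<Rightarrow> t m')"

lemma cns_0[simp]: "cns a t 0 = a" and cns_Suc[simp]: "cns a t (Suc m) = t m"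
  by (auto simp: cns_def)

lemma cns_inj[simp]: "cns a t = cns a' t' \<longleftrightarrow> a = a' \<and> t = t'"
  apply (auto simp: cns_def fun_eq_iff split: nat.splits)
  done

lemma cns_decomp: "cns (i 0) (\<lambda>m. i (Suc m)) = i"
  by (auto simp: cns_def fun_eq_iff split: nat.splits)

lemma idx_Nil: "idx [] = {\<lambda>_. 0}"
  by (auto simp: idx_def)

lemma idx_Cons_iff: "i \<in> idx (d # e) \<longleftrightarrow> i 0 < d \<and> (\<lambda>m. i (Suc m)) \<in> idx e"
  apply (auto simp: idx_def)
  subgoal for j by (cases j) auto
  subgoal for j by (cases j) auto
  done

lemma cns_in_idx[simp]: "cns a t \<in> idx (d # e) \<longleftrightarrow> a < d \<and> t \<in> idx e"
  by (simp add: idx_Cons_iff)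

lemma idx_Cons: "idx (d # e) = (\<lambda>(a,t). cns a t) ` ({..<d} \<times> idx e)"
proof (rule set_eqI)
  fix i show "i \<in> idx (d # e) \<longleftrightarrow> i \<in> (\<lambda>(a,t). cns a t) ` ({..<d} \<times> idx e)"
  proof
    assume "i \<in> idx (d # e)"
    then show "i \<in> (\<lambda>(a,t). cns a t) ` ({..<d} \<times> idx e)"
      using cns_decomp[of i] idx_Cons_iff[of i d e]
      by (auto intro!: image_eqI[where x="(i 0, \<lambda>m. i (Suc m))"])
  qed auto
qed

lemma inj_cns: "inj_on (\<lambda>(a,t). cns a t) A"
  by (auto simp: inj_on_def)

lemma finite_idx[simp]: "finite (idx e)"
  by (induction e) (auto simp: idx_Nil idx_Cons)

lemma card_idx: "card (idx e) = prod_list e"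
  by (induction e) (auto simp: idx_Nil idx_Cons card_image[OF inj_cns] card_cartesian_product)

lemma sum_prod_idx:
  fixes f :: "nat \<Rightarrow> nat \<Rightarrow> 'a::comm_semiring_1"
  shows "(\<Sum>i\<in>idx e. \<Prod>j<length e. f j (i j)) = (\<Prod>j<length e. \<Sum>s<e!j. f j s)"
proof (induction e arbitrary: f)
  case Nil then show ?case by (simp add: idx_Nil)
next
  case (Cons d e)
  have "(\<Sum>i\<in>idx (d#e). \<Prod>j<length (d#e). f j (i j))
      = (\<Sum>p\<in>{..<d} \<times> idx e. (\<lambda>i. \<Prod>j<length (d#e). f j (i j)) ((\<lambda>(a,t). cns a t) p))"
    unfolding idx_Cons by (rule sum.reindex[OF inj_cns, unfolded comp_def])
  also have "\<dots> = (\<Sum>p\<in>{..<d} \<times> idx e. \<Prod>j<Suc (length e). f j (cns (fst p) (snd p) j))"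
    by (simp add: case_prod_beta del: prod.lessThan_Suc)
  also have "\<dots> = (\<Sum>a<d. \<Sum>t\<in>idx e. \<Prod>j<Suc (length e). f j (cns a t j))"
    by (simp add: sum.cartesian_product case_prod_beta del: prod.lessThan_Suc)
  also have "\<dots> = (\<Sum>a<d. \<Sum>t\<in>idx e. f 0 a * (\<Prod>j<length e. f (Suc j) (t j)))"
    by (simp only: prod.lessThan_Suc_shift cns_0 cns_Suc)
  also have "\<dots> = (\<Sum>a<d. f 0 a) * (\<Sum>t\<in>idx e. \<Prod>j<length e. f (Suc j) (t j))"
    unfolding sum_distrib_right by (simp only: sum_distrib_left)
  also have "\<dots> = (\<Sum>a<d. f 0 a) * (\<Prod>j<length e. \<Sum>s<e!j. f (Suc j) s)"
    using Cons.IH[of "\<lambda>j. f (Suc j)"] by simp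
  also have "\<dots> = (\<Prod>j<length (d#e). \<Sum>s<(d#e)!j. f j s)"
    by (simp only: length_Cons prod.lessThan_Suc_shift nth_Cons_0 nth_Cons_Suc)
  finally show ?case .
qed

lemma idx_eq_on: "i \<in> idx e \<Longrightarrow> i' \<in> idx e \<Longrightarrow> (\<forall>j<length e. i j = i' j) \<Longrightarrow> i = i'"
  by (auto simp: idx_def fun_eq_iff) (metis not_le)



definition sc :: "complex \<Rightarrow> ('a \<Rightarrow> complex) \<Rightarrow> ('a \<Rightarrow> complex)" where
  "sc c f = (\<lambda>x. c * f x)"

interpretation fv: vector_space sc
  by unfold_locales (auto simp: sc_def fun_eq_iff algebra_simps)

lemma sc_apply[simp]: "sc c f x = c * f x" by (simp add: sc_def)

lemma sum_fun_apply: "(\<Sum>i\<in>A. f i) x = (\<Sum>i\<in>A. f i x)"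
  by (induction A rule: infinite_finite_induct) auto

definition idm :: "nat \<Rightarrow> nat \<Rightarrow> nat \<Rightarrow> complex" where
  "idm = (\<lambda>j a b. if a = b then 1 else 0)"

definition cmp :: "nat list \<Rightarrow> (nat \<Rightarrow> nat \<Rightarrow> nat \<Rightarrow> complex) \<Rightarrow> (nat \<Rightarrow> nat \<Rightarrow> nat \<Rightarrow> complex)
   \<Rightarrow> (nat \<Rightarrow> nat \<Rightarrow> nat \<Rightarrow> complex)" where
  "cmp e L M = (\<lambda>j a b. \<Sum>s<e!j. L j a s * M j s b)"

definition tcmp :: "nat list \<Rightarrow> (nat \<Rightarrow> nat \<Rightarrow> nat \<Rightarrow> complex) \<Rightarrow> (nat \<Rightarrow> nat \<Rightarrow> nat \<Rightarrow> complex)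
   \<Rightarrow> (nat \<Rightarrow> nat \<Rightarrow> nat \<Rightarrow> complex)" where
  "tcmp e L M = (\<lambda>j a b. \<Sum>s<e!j. L j s a * M j s b)"

lemma apply_local_in: "i \<in> idx e \<Longrightarrow>
   apply_local e L T i = (\<Sum>i'\<in>idx e. (\<Prod>j<length e. L j (i j) (i' j)) * T i')"
  by (simp add: apply_local_def)

lemma apply_local_out: "i \<notin> idx e \<Longrightarrow> apply_local e L T i = 0"
  by (simp add: apply_local_def)

lemma apply_local_tspace[simp]: "apply_local e L T \<in> tspace e"
  by (simp add: tspace_def apply_local_def)

lemma tspace_out: "T \<in> tspace e \<Longrightarrow> i \<notin> idx e \<Longrightarrow> T i = 0"
  by (simp add: tspace_def)

lemma apply_local_cong:
  assumes "\<And>j a b. j < length e \<Longrightarrow> a < e!j \<Longrightarrow> b < e!j \<Longrightarrow> L j a b = L' j a b"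
  shows "apply_local e L T = apply_local e L' T"
proof -
  have "(\<Prod>j<length e. L j (i j) (i' j)) = (\<Prod>j<length e. L' j (i j) (i' j))"
    if "i \<in> idx e" "i' \<in> idx e" for i i'
    using that assms by (intro prod.cong) (auto simp: idx_def)
  then show ?thesis by (auto simp: apply_local_def fun_eq_iff intro!: sum.cong)
qed

lemma apply_local_compose:
  "apply_local e L (apply_local e M T) = apply_local e (cmp e L M) T"
proof (rule ext)
  fix i
  show "apply_local e L (apply_local e M T) i = apply_local e (cmp e L M) T i"
  proof (cases "i \<in> idx e")
    case True
    have "apply_local e L (apply_local e M T) i
       = (\<Sum>i''\<in>idx e. (\<Prod>j<length e. L j (i j) (i'' j)) *
            (\<Sum>i'\<in>idx e. (\<Prod>j<length e. M j (i'' j) (i' j)) * T i'))"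
      using True by (simp add: apply_local_in)
    also have "\<dots> = (\<Sum>i''\<in>idx e. \<Sum>i'\<in>idx e. (\<Prod>j<length e. L j (i j) (i'' j)) *
            (\<Prod>j<length e. M j (i'' j) (i' j)) * T i')"
      by (simp add: sum_distrib_left mult.assoc)
    also have "\<dots> = (\<Sum>i'\<in>idx e. \<Sum>i''\<in>idx e. (\<Prod>j<length e. L j (i j) (i'' j)) *
            (\<Prod>j<length e. M j (i'' j) (i' j)) * T i')"
      by (rule sum.swap)
    also have "\<dots> = (\<Sum>i'\<in>idx e. (\<Sum>i''\<in>idx e. (\<Prod>j<length e. L j (i j) (i'' j) * M j (i'' j) (i' j))) * T i')"
      by (simp add: sum_distrib_right prod.distrib)
    also have "\<dots> = (\<Sum>i'\<in>idx e. (\<Prod>j<length e. cmp e L M j (i j) (i' j)) * T i')"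
      by (simp add: sum_prod_idx[where f="\<lambda>j s. L j (i j) s * M j s (_ j)"] cmp_def)
    also have "\<dots> = apply_local e (cmp e L M) T i" using True by (simp add: apply_local_in)
    finally show ?thesis .
  qed (simp add: apply_local_out)
qed

lemma prod_idm: "i \<in> idx e \<Longrightarrow> i' \<in> idx e \<Longrightarrow>
   (\<Prod>j<length e. idm j (i j) (i' j)) = (if i' = i then 1 else 0)"
  using idx_eq_on[of i e i'] by (auto simp: idm_def)

lemma apply_local_idm: "T \<in> tspace e \<Longrightarrow> apply_local e idm T = T"
proof (rule ext)
  fix i assume T: "T \<in> tspace e"
  show "apply_local e idm T i = T i"
  proof (cases "i \<in> idx e")
    case True
    then have "apply_local e idm T i = (\<Sum>i'\<in>idx e. (if i' = i then 1 else 0) * T i')"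
      by (simp add: apply_local_in prod_idm cong: sum.cong)
    also have "\<dots> = (\<Sum>i'\<in>idx e. if i' = i then T i' else 0)"
      by (rule sum.cong) auto
    also have "\<dots> = T i" using True by (simp add: sum.delta')
    finally show ?thesis .
  qed (simp add: apply_local_out tspace_out[OF T])
qed

definition pr :: "nat list \<Rightarrow> ((nat \<Rightarrow> nat) \<Rightarrow> complex) \<Rightarrow> ((nat \<Rightarrow> nat) \<Rightarrow> complex) \<Rightarrow> complex" where
  "pr e v w = (\<Sum>t\<in>idx e. v t * w t)"

lemma pr_apply_local:
  "pr e (apply_local e A v) (apply_local e B w) = pr e v (apply_local e (tcmp e A B) w)"
proof -
  have "pr e (apply_local e A v) (apply_local e B w)
     = (\<Sum>t\<in>idx e. (\<Sum>t'\<in>idx e. (\<Prod>j<length e. A j (t j) (t' j)) * v t') *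
           (\<Sum>t''\<in>idx e. (\<Prod>j<length e. B j (t j) (t'' j)) * w t''))"
    by (simp add: pr_def apply_local_in)
  also have "\<dots> = (\<Sum>t'\<in>idx e. v t' * (\<Sum>t''\<in>idx e.
        (\<Sum>t\<in>idx e. \<Prod>j<length e. A j (t j) (t' j) * B j (t j) (t'' j)) * w t''))"
  proof -
    have "(\<Sum>t\<in>idx e. (\<Sum>t'\<in>idx e. (\<Prod>j<length e. A j (t j) (t' j)) * v t') *
           (\<Sum>t''\<in>idx e. (\<Prod>j<length e. B j (t j) (t'' j)) * w t''))
      = (\<Sum>t\<in>idx e. \<Sum>t'\<in>idx e. \<Sum>t''\<in>idx e. v t' * ((\<Prod>j<length e. A j (t j) (t' j)) *
           (\<Prod>j<length e. B j (t j) (t'' j)) * w t''))"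
      by (simp add: sum_product mult_ac)
    also have "\<dots> = (\<Sum>t'\<in>idx e. \<Sum>t\<in>idx e. \<Sum>t''\<in>idx e. v t' * ((\<Prod>j<length e. A j (t j) (t' j)) *
           (\<Prod>j<length e. B j (t j) (t'' j)) * w t''))"
      by (rule sum.swap)
    also have "\<dots> = (\<Sum>t'\<in>idx e. \<Sum>t''\<in>idx e. \<Sum>t\<in>idx e. v t' * ((\<Prod>j<length e. A j (t j) (t' j)) *
           (\<Prod>j<length e. B j (t j) (t'' j)) * w t''))"
      by (rule sum.cong[OF refl], rule sum.swap)
    also have "\<dots> = (\<Sum>t'\<in>idx e. v t' * (\<Sum>t''\<in>idx e.
        (\<Sum>t\<in>idx e. \<Prod>j<length e. A j (t j) (t' j) * B j (t j) (t'' j)) * w t''))"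
      by (simp add: sum_distrib_left sum_distrib_right prod.distrib)
    finally show ?thesis .
  qed
  also have "\<dots> = (\<Sum>t'\<in>idx e. v t' * (\<Sum>t''\<in>idx e.
        (\<Prod>j<length e. tcmp e A B j (t' j) (t'' j)) * w t''))"
    by (simp add: sum_prod_idx[where f="\<lambda>j s. A j s (_ j) * B j s (_ j)"] tcmp_def)
  also have "\<dots> = pr e v (apply_local e (tcmp e A B) w)"
    by (simp add: pr_def apply_local_in)
  finally show ?thesis .
qed

lemma apply_local_linear: "Vector_Spaces.linear sc sc (apply_local e L)"
  unfolding Vector_Spaces.linear_iff
  by (auto simp: fv.vector_space_axioms apply_local_def fun_eq_iff sum_distrib_left distrib_left
     sum.distrib algebra_simps)



section \<open>Rows\<close>

definition rw :: "((nat \<Rightarrow> nat) \<Rightarrow> complex) \<Rightarrow> nat \<Rightarrow> ((nat \<Rightarrow> nat) \<Rightarrow> complex)" where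
  "rw T a = (\<lambda>t. T (cns a t))"

lemma rw_tspace: "T \<in> tspace (d # e) \<Longrightarrow> rw T a \<in> tspace e"
  by (auto simp: tspace_def rw_def)

lemma al_rows:
  "apply_local (d#e) L T (cns a t) = (if a < d \<and> t \<in> idx e then
      (\<Sum>a'<d. L 0 a a' * apply_local e (\<lambda>j. L (Suc j)) (rw T a') t) else 0)"
proof (cases "a < d \<and> t \<in> idx e")
  case True
  have "apply_local (d#e) L T (cns a t)
     = (\<Sum>i'\<in>idx (d#e). (\<Prod>j<length (d#e). L j (cns a t j) (i' j)) * T i')"
    using True by (simp add: apply_local_in)
  also have "\<dots> = (\<Sum>p\<in>{..<d} \<times> idx e. (\<lambda>i'. (\<Prod>j<length (d#e). L j (cns a t j) (i' j)) * T i')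
        ((\<lambda>(a,t). cns a t) p))"
    unfolding idx_Cons by (rule sum.reindex[OF inj_cns, unfolded comp_def])
  also have "\<dots> = (\<Sum>a'<d. \<Sum>t'\<in>idx e. (\<Prod>j<Suc (length e). L j (cns a t j) (cns a' t' j)) * T (cns a' t'))"
    by (simp add: sum.cartesian_product case_prod_beta del: prod.lessThan_Suc)
  also have "\<dots> = (\<Sum>a'<d. \<Sum>t'\<in>idx e. L 0 a a' * ((\<Prod>j<length e. L (Suc j) (t j) (t' j)) * T (cns a' t')))"
    by (simp only: prod.lessThan_Suc_shift cns_0 cns_Suc mult.assoc)
  also have "\<dots> = (\<Sum>a'<d. L 0 a a' * apply_local e (\<lambda>j. L (Suc j)) (rw T a') t)"
    using True by (simp add: apply_local_in rw_def sum_distrib_left)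
  finally show ?thesis using True by simp
next
  case False
  then show ?thesis by (subst apply_local_out) auto
qed

lemma row_apply_local:
  "a < d \<Longrightarrow> rw (apply_local (d#e) L T) a = (\<Sum>a'<d. sc (L 0 a a') (apply_local e (\<lambda>j. L (Suc j)) (rw T a')))"
  by (auto simp: fun_eq_iff rw_def al_rows sum_fun_apply apply_local_out)

lemma tensor_eq_rows:
  assumes "T \<in> tspace (d#e)" "T' \<in> tspace (d#e)" "\<And>a. a < d \<Longrightarrow> rw T a = rw T' a"
  shows "T = T'"
proof (rule ext)
  fix i show "T i = T' i"
  proof (cases "i \<in> idx (d#e)")
    case True
    then have "i 0 < d" by (simp add: idx_Cons_iff)
    from assms(3)[OF this] have "T (cns (i 0) (\<lambda>m. i (Suc m))) = T' (cns (i 0) (\<lambda>m. i (Suc m)))"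
      by (simp add: rw_def fun_eq_iff)
    then show ?thesis by (simp add: cns_decomp)
  qed (use assms in \<open>simp add: tspace_out\<close>)
qed

definition mk :: "nat \<Rightarrow> nat list \<Rightarrow> (nat \<Rightarrow> (nat \<Rightarrow> nat) \<Rightarrow> complex) \<Rightarrow> ((nat \<Rightarrow> nat) \<Rightarrow> complex)" where
  "mk d e r = (\<lambda>i. if i \<in> idx (d#e) then r (i 0) (\<lambda>m. i (Suc m)) else 0)"

lemma mk_tspace[simp]: "mk d e r \<in> tspace (d#e)"
  by (simp add: mk_def tspace_def)

lemma rw_mk: "a < d \<Longrightarrow> r a \<in> tspace e \<Longrightarrow> rw (mk d e r) a = r a"
  by (auto simp: mk_def rw_def fun_eq_iff tspace_out)

definition lcons :: "(nat \<Rightarrow> nat \<Rightarrow> complex) \<Rightarrow> (nat \<Rightarrow> nat \<Rightarrow> nat \<Rightarrow> complex) \<Rightarrow> (nat \<Rightarrow> nat \<Rightarrow> nat \<Rightarrow> complex)" where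
  "lcons L0 L' = (\<lambda>j. case j of 0 \<Rightarrow> L0 | Suc j' \<Rightarrow> L' j')"

lemma le_rows1:
  assumes "slocc_le (d#e) psi phi"
  obtains L0 L' where "\<And>a. a < d \<Longrightarrow> rw psi a = (\<Sum>a'<d. sc (L0 a a') (apply_local e L' (rw phi a')))"
  using assms unfolding slocc_le_def by (auto simp: row_apply_local)

lemma le_rows2:
  assumes "psi \<in> tspace (d#e)"
    and "\<And>a. a < d \<Longrightarrow> rw psi a = (\<Sum>a'<d. sc (L0 a a') (apply_local e L' (rw phi a')))"
  shows "slocc_le (d#e) psi phi"
  unfolding slocc_le_def
  apply (rule exI[of _ "lcons L0 L'"])
  apply (rule tensor_eq_rows)
  using assms by (auto simp: row_apply_local lcons_def)

section \<open>Basic linear algebra\<close>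

lemma subspace_tspace: "fv.subspace (tspace e)"
  by (auto simp: fv.subspace_def tspace_def)

definition dl :: "(nat \<Rightarrow> nat) \<Rightarrow> ((nat \<Rightarrow> nat) \<Rightarrow> complex)" where
  "dl t = (\<lambda>s. if s = t then 1 else 0)"

lemma inj_dl: "inj dl"
  by (auto simp: inj_on_def dl_def fun_eq_iff)

lemma tspace_expand: assumes "v \<in> tspace e" shows "v = (\<Sum>t\<in>idx e. sc (v t) (dl t))"
proof (rule ext)
  fix s
  have "(\<Sum>t\<in>idx e. sc (v t) (dl t)) s = (\<Sum>t\<in>idx e. if t = s then v t else 0)"
    unfolding sum_fun_apply by (rule sum.cong) (auto simp: dl_def)
  also have "\<dots> = v s" using tspace_out[OF assms] by (auto simp: sum.delta')
  finally show "v s = (\<Sum>t\<in>idx e. sc (v t) (dl t)) s" by simp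
qed

lemma tspace_span_dl: "tspace e \<subseteq> fv.span (dl ` idx e)"
proof
  fix v assume v: "v \<in> tspace e"
  show "v \<in> fv.span (dl ` idx e)"
    by (subst tspace_expand[OF v], rule fv.span_sum, rule fv.span_scale, rule fv.span_base) auto
qed

lemma dl_tspace: "t \<in> idx e \<Longrightarrow> dl t \<in> tspace e"
  by (auto simp: tspace_def dl_def)

lemma span_tspace: "X \<subseteq> tspace e \<Longrightarrow> fv.span X \<subseteq> tspace e"
  by (rule fv.span_minimal[OF _ subspace_tspace])

lemma indep_dl: "fv.independent (dl ` A)" if "finite A"
proof -
  have "u v = 0" if "v \<in> dl ` A" "(\<Sum>v\<in>dl ` A. sc (u v) v) = 0" for u v
  proof -
    from that obtain t where t: "t \<in> A" "v = dl t" by auto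
    have "(\<Sum>v\<in>dl ` A. sc (u v) v) t = (\<Sum>s\<in>A. sc (u (dl s)) (dl s) t)"
      by (simp add: sum_fun_apply sum.reindex[OF inj_on_subset[OF inj_dl]])
    also have "\<dots> = (\<Sum>s\<in>A. if s = t then u (dl s) else 0)"
      by (rule sum.cong) (auto simp: dl_def)
    also have "\<dots> = u (dl t)" using \<open>finite A\<close> t(1) by (simp add: sum.delta')
    finally have "(\<Sum>v\<in>dl ` A. sc (u v) v) t = u (dl t)" .
    then show ?thesis using that(2) t by simp
  qed
  then show ?thesis using \<open>finite A\<close> by (auto simp: fv.dependent_finite)
qed

section \<open>Bilinear pairing\<close>

lemma pr_sc_l[simp]: "pr e (sc c v) w = c * pr e v w"
  and pr_sc_r[simp]: "pr e v (sc c w) = c * pr e v w"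
  and pr_add_l[simp]: "pr e (v + v') w = pr e v w + pr e v' w"
  and pr_add_r[simp]: "pr e v (w + w') = pr e v w + pr e v w'"
  and pr_diff_l[simp]: "pr e (v - v') w = pr e v w - pr e v' w"
  and pr_diff_r[simp]: "pr e v (w - w') = pr e v w - pr e v w'"
  and pr_zero_l[simp]: "pr e 0 w = 0"
  and pr_zero_r[simp]: "pr e v 0 = 0"
  by (auto simp: pr_def sum_distrib_left algebra_simps sum.distrib sum_subtractf)

lemma pr_sum_l: "pr e (\<Sum>a\<in>A. f a) w = (\<Sum>a\<in>A. pr e (f a) w)"
  by (simp add: pr_def sum_fun_apply sum_distrib_right) (rule sum.swap)

lemma pr_sum_r: "pr e v (\<Sum>a\<in>A. f a) = (\<Sum>a\<in>A. pr e v (f a))"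
  by (simp add: pr_def sum_fun_apply sum_distrib_left) (rule sum.swap)

lemma pr_comm: "pr e v w = pr e w v"
  by (simp add: pr_def mult.commute)

lemma pr_dl: assumes "t \<in> idx e" shows "pr e (dl t) v = v t"
proof -
  have "pr e (dl t) v = (\<Sum>s\<in>idx e. if s = t then v s else 0)"
    unfolding pr_def dl_def by (rule sum.cong) auto
  also have "\<dots> = v t" using assms by (simp add: sum.delta')
  finally show ?thesis .
qed

lemma tspace_nonzero: "v \<in> tspace e \<Longrightarrow> v \<noteq> 0 \<Longrightarrow> \<exists>t\<in>idx e. v t \<noteq> 0"
  by (auto simp: fun_eq_iff tspace_def)

lemma tspace_sum: "(\<And>a. a \<in> A \<Longrightarrow> f a \<in> tspace e) \<Longrightarrow> (\<Sum>a\<in>A. f a) \<in> tspace e"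
  by (induction A rule: infinite_finite_induct) (auto simp: tspace_def)

lemma tspace_sc[simp]: "v \<in> tspace e \<Longrightarrow> sc c v \<in> tspace e"
  and tspace_add[simp]: "v \<in> tspace e \<Longrightarrow> w \<in> tspace e \<Longrightarrow> v + w \<in> tspace e"
  and tspace_diff[simp]: "v \<in> tspace e \<Longrightarrow> w \<in> tspace e \<Longrightarrow> v - w \<in> tspace e"
  and tspace_zero[simp]: "0 \<in> tspace e"
  by (auto simp: tspace_def)

lemma pr_nondeg: "v \<in> tspace e \<Longrightarrow> (\<And>w. w \<in> tspace e \<Longrightarrow> pr e w v = 0) \<Longrightarrow> v = 0"
  using tspace_nonzero[of v e] dl_tspace pr_dl by metis

section \<open>Families\<close>

definition findep :: "nat \<Rightarrow> (nat \<Rightarrow> 'a \<Rightarrow> complex) \<Rightarrow> bool" where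
  "findep n x \<longleftrightarrow> (\<forall>c. (\<Sum>a<n. sc (c a) (x a)) = 0 \<longrightarrow> (\<forall>a<n. c a = 0))"

lemma findep_inj: assumes "findep n x" shows "inj_on x {..<n}"
proof (rule inj_onI, rule ccontr)
  fix a b assume ab: "a \<in> {..<n}" "b \<in> {..<n}" "x a = x b" "a \<noteq> b"
  define c where "c = (\<lambda>i. if i = a then (1::complex) else if i = b then -1 else 0)"
  have "(\<Sum>i<n. sc (c i) (x i)) = (\<Sum>i\<in>{a,b}. sc (c i) (x i))"
    by (rule sum.mono_neutral_right) (use ab in \<open>auto simp: c_def\<close>)
  also have "\<dots> = 0" using ab by (simp add: c_def fun_eq_iff sc_def)
  finally have "c a = 0" using assms ab unfolding findep_def by blast
  then show False by (simp add: c_def)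
qed

lemma findep_indep: assumes "findep n x" shows "fv.independent (x ` {..<n})"
proof -
  have inj: "inj_on x {..<n}" by (rule findep_inj[OF assms])
  have "u v = 0" if "v \<in> x ` {..<n}" "(\<Sum>v\<in>x ` {..<n}. sc (u v) v) = 0" for u v
  proof -
    have "(\<Sum>a<n. sc (u (x a)) (x a)) = 0"
      using that(2) by (simp add: sum.reindex[OF inj])
    then have "\<forall>a<n. u (x a) = 0"
      using assms[unfolded findep_def, rule_format, of "\<lambda>a. u (x a)"] by blast
    then show ?thesis using that(1) by auto
  qed
  then show ?thesis by (auto simp: fv.dependent_finite)
qed

lemma indep_findep:
  assumes "inj_on x {..<n}" "fv.independent (x ` {..<n})" shows "findep n x"
  unfolding findep_def
proof (rule allI, rule impI)
  fix c assume c: "(\<Sum>a<n. sc (c a) (x a)) = 0"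
  define u where "u v = c (the_inv_into {..<n} x v)" for v
  have "(\<Sum>v\<in>x ` {..<n}. sc (u v) v) = (\<Sum>a<n. sc (c a) (x a))"
    by (simp add: sum.reindex[OF assms(1)] u_def the_inv_into_f_f[OF assms(1)])
  then have "\<forall>v\<in>x ` {..<n}. u v = 0" using c assms(2) by (auto simp: fv.dependent_finite)
  then show "\<forall>a<n. c a = 0" by (auto simp: u_def the_inv_into_f_f[OF assms(1)])
qed

lemma steinitz_fam:
  assumes "findep n x" "finite Y" "\<And>a. a < n \<Longrightarrow> x a \<in> fv.span Y"
  shows "n \<le> card Y"
proof -
  have "card (x ` {..<n}) \<le> card Y"
    using fv.independent_span_bound[OF assms(2) findep_indep[OF assms(1)]] assms(3) by auto
  then show ?thesis using card_image[OF findep_inj[OF assms(1)]] by simp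
qed

lemma steinitz_tspace:
  assumes "findep n x" "\<And>a. a < n \<Longrightarrow> x a \<in> tspace e"
  shows "n \<le> prod_list e"
proof -
  have "n \<le> card (dl ` idx e)"
    by (rule steinitz_fam[OF assms(1)]) (use assms(2) tspace_span_dl in auto)
  then show ?thesis by (simp add: card_image[OF inj_on_subset[OF inj_dl]] card_idx)
qed

lemma findep_less: assumes "findep (Suc n) x" shows "findep n x"
  unfolding findep_def
proof (rule allI, rule impI)
  fix c assume c: "(\<Sum>a<n. sc (c a) (x a)) = 0"
  have "(\<Sum>a<Suc n. sc ((c(n:=0)) a) (x a)) = (\<Sum>a<n. sc ((c(n:=0)) a) (x a)) + sc 0 (x n)"
    by simp
  also have "(\<Sum>a<n. sc ((c(n:=0)) a) (x a)) = (\<Sum>a<n. sc (c a) (x a))"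
    by (rule sum.cong) auto
  also have "sc 0 (x n) = 0" by (rule fv.scale_zero_left)
  finally have "(\<Sum>a<Suc n. sc ((c(n:=0)) a) (x a)) = 0" using c by simp
  then have "\<forall>a<Suc n. (c(n:=0)) a = 0"
    using assms[unfolded findep_def, rule_format, of "c(n:=0)"] by blast
  then show "\<forall>a<n. c a = 0" by (metis fun_upd_apply less_Suc_eq nat_neq_iff)
qed

lemma span_fam: "(\<And>a. a < (n::nat) \<Longrightarrow> x a \<in> fv.span Y) \<Longrightarrow> (\<Sum>a<n. sc (c a) (x a)) \<in> fv.span Y"
  by (auto intro!: fv.span_sum fv.span_scale simp: sc_def[symmetric])

lemma span_fam_explicit: "v \<in> fv.span (x ` {..<(n::nat)}) \<Longrightarrow> \<exists>c. v = (\<Sum>a<n. sc (c a) (x a))"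
proof (induction rule: fv.span_induct_alt)
  case base
  have "(0::'a \<Rightarrow> complex) = (\<Sum>a<n. sc 0 (x a))" by (simp add: fv.scale_zero_left)
  then show ?case by (rule exI[where x="\<lambda>_. 0"])
next
  case (step c' y z)
  from step(2) obtain c where c: "z = (\<Sum>a<n. sc (c a) (x a))" by blast
  from step(1) obtain b where b: "b < n" "y = x b" by blast
  have "sc c' y + z = (\<Sum>a<n. sc ((c(b := c b + c')) a) (x a))"
  proof (rule ext)
    fix s
    have "(\<Sum>a<n. sc ((c(b := c b + c')) a) (x a)) s = (\<Sum>a<n. c a * x a s + (if a = b then c' * x b s else 0))"
      unfolding sum_fun_apply by (rule sum.cong) (auto simp: algebra_simps)
    also have "\<dots> = (\<Sum>a<n. c a * x a s) + (\<Sum>a<n. if a = b then c' * x b s else 0)"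
      by (rule sum.distrib)
    also have "(\<Sum>a<n. if a = b then c' * x b s else 0) = c' * x b s"
      using b(1) by (subst sum.delta) simp_all
    finally show "(sc c' y + z) s = (\<Sum>a<n. sc ((c(b := c b + c')) a) (x a)) s"
      by (simp add: c b sum_fun_apply)
  qed
  then show ?case by blast
qed



lemma al_hom: "module_hom sc sc (apply_local e L)"
  using apply_local_linear module_hom_iff_linear by blast

lemma sum_lessThan_add: "(\<Sum>i<a+b. g i) = (\<Sum>i<a. g i) + (\<Sum>j<(b::nat). g (a+j))"
  by (induction b) (simp_all add: add.assoc)

lemma sum_delta_fun: "b < n \<Longrightarrow> (\<Sum>a<(n::nat). r a * (if b = a then 1 else 0)) = (r b :: complex)"
  by (simp add: if_distrib sum.delta' cong: if_cong)

lemma sum_delta_fun': "b < n \<Longrightarrow> (\<Sum>a<(n::nat). r a * (if a = b then 1 else 0)) = (r b :: complex)"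
  by (simp add: if_distrib sum.delta cong: if_cong)

lemma sc_sum_neg: "(\<Sum>a\<in>A. sc (- r a) (v a)) = - (\<Sum>a\<in>A. sc (r a) (v a))"
  by (simp add: fv.scale_minus_left sum_negf)

lemma findep_nonzero_comb:
  assumes "findep n x" "(\<Sum>a<n. sc (c a) (x a)) = 0" "b < n" shows "c b = 0"
  using assms unfolding findep_def by blast

lemma dual_basis:
  assumes "findep k x" "\<And>a. a < k \<Longrightarrow> x a \<in> tspace e"
  shows "\<exists>y. (\<forall>a<k. y a \<in> tspace e) \<and> (\<forall>a<k. \<forall>b<k. pr e (y a) (x b) = (if a = b then 1 else 0))"
  using assms
proof (induction k)
  case 0 then show ?case by auto
next
  case (Suc k)
  from Suc.prems(1) have ind: "findep k x" by (rule findep_less)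
  have xk: "\<And>a. a < k \<Longrightarrow> x a \<in> tspace e" using Suc.prems(2) by auto
  from Suc.IH[OF ind xk] obtain y' where
    y'T: "\<And>a. a < k \<Longrightarrow> y' a \<in> tspace e" and
    y'd: "\<And>a b. a < k \<Longrightarrow> b < k \<Longrightarrow> pr e (y' a) (x b) = (if a = b then 1 else 0)"
    by blast
  define r where "r b = pr e (y' b) (x k)" for b
  define z where "z = x k - (\<Sum>b<k. sc (r b) (x b))"
  have xT: "\<And>a. a < Suc k \<Longrightarrow> x a \<in> tspace e" by (rule Suc.prems(2))
  have zT: "z \<in> tspace e" unfolding z_def by (intro tspace_diff tspace_sum tspace_sc) (auto intro: xT)
  have z_ne: "z \<noteq> 0"
  proof
    assume z0: "z = 0"
    define c where "c a = (if a = k then 1 else - r a)" for a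
    have "(\<Sum>a<Suc k. sc (c a) (x a)) = (\<Sum>a<k. sc (- r a) (x a)) + sc 1 (x k)"
      by (simp add: c_def)
    also have "\<dots> = z" by (simp add: z_def sc_sum_neg fv.scale_one sum_negf)
    finally have "c k = 0" using findep_nonzero_comb[OF Suc.prems(1)] z0 by blast
    then show False by (simp add: c_def)
  qed
  have pz: "pr e (y' a) z = 0" if "a < k" for a
    using that by (simp add: z_def pr_sum_r y'd r_def sum_delta_fun)
  from tspace_nonzero[OF zT z_ne] obtain t where t: "t \<in> idx e" "z t \<noteq> 0" by blast
  define f where "f = sc (1 / z t) (dl t - (\<Sum>b<k. sc (x b t) (y' b)))"
  have fT: "f \<in> tspace e" unfolding f_def
    by (intro tspace_diff tspace_sum tspace_sc) (auto intro: y'T dl_tspace[OF t(1)])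
  have fx: "pr e f (x a) = 0" if "a < k" for a
  proof -
    have "pr e (\<Sum>b<k. sc (x b t) (y' b)) (x a) = x a t"
      using that by (simp add: pr_sum_l y'd sum_delta_fun')
    then show ?thesis by (simp add: f_def pr_dl[OF t(1)])
  qed
  have fz: "pr e f z = 1"
  proof -
    have "pr e (\<Sum>b<k. sc (x b t) (y' b)) z = 0"
      by (simp add: pr_sum_l pz)
    then show ?thesis using t(2) by (simp add: f_def pr_dl[OF t(1)])
  qed
  have fxk: "pr e f (x k) = 1"
  proof -
    have "x k = z + (\<Sum>b<k. sc (r b) (x b))" by (simp add: z_def)
    then have "pr e f (x k) = pr e f z + (\<Sum>b<k. r b * pr e f (x b))"
      by (simp add: pr_sum_r)
    also have "\<dots> = 1" by (simp add: fz fx)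
    finally show ?thesis .
  qed
  define y where "y a = (if a = k then f else y' a - sc (r a) f)" for a
  show ?case
  proof (intro exI[of _ y] conjI allI impI)
    fix a assume "a < Suc k"
    then show "y a \<in> tspace e" using fT y'T by (auto simp: y_def)
  next
    fix a b assume ab: "a < Suc k" "b < Suc k"
    show "pr e (y a) (x b) = (if a = b then 1 else 0)"
    proof (cases "a = k")
      case True
      then show ?thesis using ab fx fxk by (cases "b = k") (auto simp: y_def)
    next
      case False
      then have "a < k" using ab by simp
      then show ?thesis using ab fx fxk y'd by (cases "b = k") (auto simp: y_def r_def)
    qed
  qed
qed

lemma annih_exists:
  assumes "findep m w" "\<And>a. a < m \<Longrightarrow> w a \<in> tspace e" "m + k = prod_list e"
  shows "\<exists>x. findep k x \<and> (\<forall>b<k. x b \<in> tspace e) \<and> (\<forall>a<m. \<forall>b<k. pr e (w a) (x b) = 0)"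
proof -
  obtain ee where eeT: "\<And>a. a < m \<Longrightarrow> ee a \<in> tspace e"
    and eed: "\<And>a b. a < m \<Longrightarrow> b < m \<Longrightarrow> pr e (ee a) (w b) = (if a = b then 1 else 0)"
    using dual_basis[OF assms(1,2)] by blast
  define P where "P v = v - (\<Sum>a<m. sc (pr e (w a) v) (ee a))" for v
  have PT: "v \<in> tspace e \<Longrightarrow> P v \<in> tspace e" for v
    unfolding P_def by (intro tspace_diff tspace_sum tspace_sc) (auto intro: eeT)
  have Pw: "pr e (w b) (P v) = 0" if "b < m" for b v
  proof -
    have "pr e (w b) (\<Sum>a<m. sc (pr e (w a) v) (ee a)) = pr e (w b) v"
      using that by (simp add: pr_sum_r pr_comm[of e "w b" "ee _"] eed sum_delta_fun')
    then show ?thesis by (simp add: P_def)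
  qed
  define Z where "Z = P ` dl ` idx e"
  have finZ: "finite Z" by (simp add: Z_def)
  obtain B where B: "B \<subseteq> Z" "fv.independent B" "Z \<subseteq> fv.span B"
    using fv.maximal_independent_subset[of Z] by blast
  have finB: "finite B" using B(1) finZ finite_subset by blast
  have "dl ` idx e \<subseteq> fv.span (B \<union> ee ` {..<m})"
  proof
    fix v assume "v \<in> dl ` idx e"
    then have vZ: "P v \<in> Z" by (auto simp: Z_def)
    have "P v \<in> fv.span (B \<union> ee ` {..<m})"
      using B(3) vZ fv.span_mono[of B "B \<union> ee ` {..<m}"] by blast
    moreover have "(\<Sum>a<m. sc (pr e (w a) v) (ee a)) \<in> fv.span (B \<union> ee ` {..<m})"
      by (rule span_fam) (auto intro: fv.span_base)
    ultimately have "P v + (\<Sum>a<m. sc (pr e (w a) v) (ee a)) \<in> fv.span (B \<union> ee ` {..<m})"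
      by (rule fv.span_add)
    then show "v \<in> fv.span (B \<union> ee ` {..<m})" by (simp add: P_def)
  qed
  then have "card (dl ` idx e) \<le> card (B \<union> ee ` {..<m})"
    using fv.independent_span_bound[OF _ indep_dl[OF finite_idx]] finB by auto
  also have "\<dots> \<le> card B + card (ee ` {..<m})" by (rule card_Un_le)
  also have "\<dots> \<le> card B + m" using card_image_le[of "{..<m}" ee] by simp
  finally have "prod_list e \<le> card B + m"
    by (simp add: card_image[OF inj_on_subset[OF inj_dl]] card_idx)
  then have kB: "k \<le> card B" using assms(3) by simp
  obtain h where h: "bij_betw h {0..<card B} B" using ex_bij_betw_nat_finite[OF finB] by blast
  have injh: "inj_on h {..<k}"
    using bij_betw_imp_inj_on[OF h] kB by (auto intro: inj_on_subset)
  have hB: "h ` {..<k} \<subseteq> B" using bij_betw_imp_surj_on[OF h] kB by auto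
  have hZ: "h b \<in> Z" if "b < k" for b using hB B(1) that by auto
  show ?thesis
  proof (intro exI[of _ h] conjI allI impI)
    show "findep k h"
      by (rule indep_findep[OF injh fv.independent_mono[OF B(2) hB]])
  next
    fix b assume "b < k"
    then obtain t where "t \<in> idx e" "h b = P (dl t)" using hZ by (auto simp: Z_def)
    then show "h b \<in> tspace e" using PT dl_tspace by auto
  next
    fix a b assume "a < m" "b < k"
    then obtain t where "h b = P (dl t)" using hZ by (auto simp: Z_def)
    then show "pr e (w a) (h b) = 0" using Pw \<open>a < m\<close> by simp
  qed
qed



lemma annspan:
  assumes xI: "findep k x" and xT: "\<And>b. b < k \<Longrightarrow> x b \<in> tspace e"
    and yI: "findep m y" and yT: "\<And>a. a < m \<Longrightarrow> y a \<in> tspace e"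
    and yx: "\<And>a b. a < m \<Longrightarrow> b < k \<Longrightarrow> pr e (y a) (x b) = 0"
    and dim: "m + k = prod_list e"
    and uT: "u \<in> tspace e" and ux: "\<And>b. b < k \<Longrightarrow> pr e u (x b) = 0"
  shows "u \<in> fv.span (y ` {..<m})"
proof (rule ccontr)
  assume nu: "u \<notin> fv.span (y ` {..<m})"
  obtain ee where eeT: "\<And>a. a < k \<Longrightarrow> ee a \<in> tspace e"
    and eed: "\<And>a b. a < k \<Longrightarrow> b < k \<Longrightarrow> pr e (ee a) (x b) = (if a = b then 1 else 0)"
    using dual_basis[OF xI xT] by blast
  define F where "F i = (if i < m then y i else if i = m then u else ee (i - Suc m))" for i
  have "findep (Suc m + k) F"
    unfolding findep_def
  proof (rule allI, rule impI)
    fix c assume S0: "(\<Sum>i<Suc m + k. sc (c i) (F i)) = 0"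
    define A where "A = (\<Sum>i<m. sc (c i) (y i))"
    define C where "C = (\<Sum>j<k. sc (c (Suc m + j)) (ee j))"
    have s1: "(\<Sum>i<m. sc (c i) (F i)) = A" unfolding A_def by (rule sum.cong) (auto simp: F_def)
    have s2: "(\<Sum>j<k. sc (c (Suc m + j)) (F (Suc m + j))) = C"
      unfolding C_def by (rule sum.cong) (auto simp: F_def)
    have S: "A + sc (c m) u + C = 0"
      using S0 unfolding sum_lessThan_add sum.lessThan_Suc s1 s2 by (simp add: F_def)
    have cC: "c (Suc m + l) = 0" if "l < k" for l
    proof -
      have "pr e A (x l) = 0" by (simp add: A_def pr_sum_l yx that)
      moreover have "pr e C (x l) = c (Suc m + l)"
        using that by (simp add: C_def pr_sum_l eed sum_delta_fun')
      moreover have "pr e (A + sc (c m) u + C) (x l) = 0" using S by simp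
      ultimately show ?thesis using ux[OF that] by simp
    qed
    have C0: "C = 0" unfolding C_def using cC by (simp add: fv.scale_zero_left)
    have cm: "c m = 0"
    proof (rule ccontr)
      assume cm: "c m \<noteq> 0"
      have "u = sc (- 1 / c m) A"
      proof -
        have "sc (c m) u = - A" using S C0 by (simp add: add.commute eq_neg_iff_add_eq_0)
        then have "sc (1 / c m) (sc (c m) u) = sc (1 / c m) (- A)" by simp
        then show ?thesis using cm by (simp add: fv.scale_scale fv.scale_minus_right fv.scale_minus_left)
      qed
      moreover have "A \<in> fv.span (y ` {..<m})" unfolding A_def by (rule span_fam) (auto intro: fv.span_base)
      ultimately show False using nu fv.span_scale by metis
    qed
    have "A = 0" using S C0 cm by (simp add: fv.scale_zero_left)
    then have cA: "\<And>i. i < m \<Longrightarrow> c i = 0" using findep_nonzero_comb[OF yI] by (simp add: A_def)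
    show "\<forall>i<Suc m + k. c i = 0"
    proof (intro allI impI)
      fix i assume i: "i < Suc m + k"
      show "c i = 0"
      proof (cases "i < m")
        case True then show ?thesis by (rule cA)
      next
        case False
        show ?thesis
        proof (cases "i = m")
          case True then show ?thesis using cm by simp
        next
          case False
          with \<open>\<not> i < m\<close> obtain l where "i = Suc m + l" "l < k" using i
            by (metis add_less_cancel_left le_Suc_ex less_Suc_eq_le linorder_neqE_nat not_le)
          then show ?thesis using cC by simp
        qed
      qed
    qed
  qed
  moreover have "\<And>i. i < Suc m + k \<Longrightarrow> F i \<in> tspace e"
    using yT uT eeT by (auto simp: F_def)
  ultimately have "Suc m + k \<le> prod_list e" by (rule steinitz_tspace)
  then show False using dim by simp
qed

lemma sum_sel: "a < (d::nat) \<Longrightarrow> (\<Sum>a'<d. sc (if a' = a then 1 else 0) (v a')) = v a"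
proof -
  assume a: "a < d"
  have "(\<Sum>a'<d. sc (if a' = a then 1 else 0) (v a')) = (\<Sum>a'<d. if a' = a then v a' else 0)"
    by (rule sum.cong) (auto simp: fv.scale_one fv.scale_zero_left)
  also have "\<dots> = v a" using a by (simp add: sum.delta)
  finally show ?thesis .
qed

lemma sum_restr: assumes "R \<subseteq> {..<(d::nat)}"
  shows "(\<Sum>a'<d. sc (if a' \<in> R then r a' else 0) (v a')) = (\<Sum>a'\<in>R. sc (r a') (v a'))"
proof -
  have "(\<Sum>a'<d. sc (if a' \<in> R then r a' else 0) (v a')) = (\<Sum>a'<d. if a' \<in> R then sc (r a') (v a') else 0)"
    by (rule sum.cong) (auto simp: fv.scale_zero_left)
  also have "\<dots> = (\<Sum>a'\<in>R. sc (r a') (v a'))"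
    using assms by (simp add: sum.If_cases Int_absorb1)
  finally show ?thesis .
qed

lemma max_findep:
  assumes mx: "slocc_maximal (d#e) phi" and dle: "d \<le> prod_list e"
  shows "findep d (rw phi)"
proof (rule ccontr)
  assume "\<not> findep d (rw phi)"
  then obtain c a0 where c0: "(\<Sum>a<d. sc (c a) (rw phi a)) = 0" and a0: "a0 < d" "c a0 \<noteq> 0"
    unfolding findep_def by blast
  define w where "w = rw phi"
  have phiT: "phi \<in> tspace (d#e)" using mx by (simp add: slocc_maximal_def)
  have wT: "\<And>a. w a \<in> tspace e" unfolding w_def using rw_tspace[OF phiT] by blast
  define R where "R = {..<d} - {a0}"
  have Rsub: "R \<subseteq> {..<d}" by (auto simp: R_def)
  define Z where "Z = w ` R"
  have finZ: "finite Z" by (simp add: Z_def R_def)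
  have cardZ: "card Z < prod_list e"
  proof -
    have "card Z \<le> card R" unfolding Z_def by (rule card_image_le) (simp add: R_def)
    also have "card R = d - 1" using a0 by (simp add: R_def)
    finally show ?thesis using dle a0 by simp
  qed
  obtain t where t: "t \<in> idx e" "dl t \<notin> fv.span Z"
  proof -
    have "\<not> dl ` idx e \<subseteq> fv.span Z"
    proof
      assume "dl ` idx e \<subseteq> fv.span Z"
      then have "card (dl ` idx e) \<le> card Z"
        using fv.independent_span_bound[OF finZ indep_dl[OF finite_idx]] by auto
      then show False using cardZ by (simp add: card_image[OF inj_on_subset[OF inj_dl]] card_idx)
    qed
    then show ?thesis using that by blast
  qed
  define r where "r a = - c a / c a0" for a
  have wa0: "w a0 = (\<Sum>a\<in>R. sc (r a) (w a))"
  proof -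
    have "(\<Sum>a<d. sc (c a) (w a)) = sc (c a0) (w a0) + (\<Sum>a\<in>R. sc (c a) (w a))"
      unfolding R_def using a0 by (simp add: sum.remove)
    then have "sc (c a0) (w a0) = - (\<Sum>a\<in>R. sc (c a) (w a))"
      using c0 unfolding w_def by (simp add: eq_neg_iff_add_eq_0)
    then have "sc (1 / c a0) (sc (c a0) (w a0)) = sc (1 / c a0) (- (\<Sum>a\<in>R. sc (c a) (w a)))" by simp
    then show ?thesis using a0(2)
      by (simp add: r_def fv.scale_scale fv.scale_minus_right fv.scale_sum_right divide_inverse
          mult.commute fv.scale_minus_left sum_negf)
  qed
  define rr where "rr a = (if a = a0 then dl t else w a)" for a
  define psi where "psi = mk d e rr"
  have rrT: "rr a \<in> tspace e" for a using wT dl_tspace[OF t(1)] by (simp add: rr_def)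
  have rpsi: "rw psi a = rr a" if "a < d" for a using rw_mk[OF that rrT] by (simp add: psi_def)
  have psiT: "psi \<in> tspace (d#e)" by (simp add: psi_def)
  define L0 where "L0 a a' = (if a = a0 then (if a' \<in> R then r a' else 0) else (if a' = a then 1 else 0))" for a a'
  have "slocc_le (d#e) phi psi"
  proof (rule le_rows2[of phi d e L0 idm psi])
    show "phi \<in> tspace (d#e)" by (rule phiT)
  next
    fix a assume a: "a < d"
    have eq: "(\<Sum>a'<d. sc (L0 a a') (apply_local e idm (rw psi a'))) = (\<Sum>a'<d. sc (L0 a a') (rr a'))"
      by (rule sum.cong) (auto simp: rpsi apply_local_idm rrT)
    show "rw phi a = (\<Sum>a'<d. sc (L0 a a') (apply_local e idm (rw psi a')))"
    proof (cases "a = a0")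
      case True
      have "(\<Sum>a'<d. sc (L0 a a') (rr a')) = (\<Sum>a'\<in>R. sc (r a') (rr a'))"
        using True sum_restr[OF Rsub] by (simp add: L0_def)
      also have "\<dots> = (\<Sum>a'\<in>R. sc (r a') (w a'))"
        by (rule sum.cong) (auto simp: rr_def R_def)
      finally show ?thesis using eq True wa0 by (simp add: w_def)
    next
      case False
      then have "(\<Sum>a'<d. sc (L0 a a') (rr a')) = rr a"
        using sum_sel[OF a] by (simp add: L0_def)
      then show ?thesis using eq False by (simp add: rr_def w_def)
    qed
  qed
  with mx psiT have "slocc_le (d#e) psi phi" by (simp add: slocc_maximal_def)
  then obtain M0 M' where M: "\<And>a. a < d \<Longrightarrow> rw psi a = (\<Sum>a'<d. sc (M0 a a') (apply_local e M' (rw phi a')))"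
    using le_rows1 by blast
  define G where "G = apply_local e M'"
  have hom: "module_hom sc sc G" unfolding G_def by (rule al_hom)
  have Gw: "G (w a') \<in> fv.span (G ` Z)" if "a' < d" for a'
  proof (cases "a' = a0")
    case True
    have "G (w a0) = (\<Sum>a\<in>R. sc (r a) (G (w a)))"
      by (simp add: wa0 module_hom.sum[OF hom] module_hom.scale[OF hom])
    also have "\<dots> \<in> fv.span (G ` Z)"
      by (intro fv.span_sum fv.span_scale fv.span_base) (auto simp: Z_def)
    finally show ?thesis using True by simp
  next
    case False then show ?thesis using that by (auto intro!: fv.span_base simp: Z_def R_def)
  qed
  have rows_in: "rr a \<in> fv.span (G ` Z)" if "a < d" for a
  proof -
    have "rw psi a \<in> fv.span (G ` Z)"
      unfolding M[OF that] by (rule span_fam) (use Gw in \<open>simp add: G_def w_def\<close>)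
    then show ?thesis using rpsi[OF that] by simp
  qed
  obtain B where B: "B \<subseteq> Z" "fv.independent B" "Z \<subseteq> fv.span B"
    using fv.maximal_independent_subset[of Z] by blast
  have finB: "finite B" using B(1) finZ finite_subset by blast
  have spB: "fv.span B = fv.span Z"
    using B fv.span_mono fv.span_span by (metis fv.span_minimal fv.subspace_span subset_antisym)
  have GZ: "fv.span (G ` Z) \<subseteq> fv.span (G ` B)"
  proof -
    have "G ` Z \<subseteq> G ` fv.span B" using B(3) by blast
    also have "\<dots> = fv.span (G ` B)" using module_hom.span_image[OF hom] by simp
    finally show ?thesis by (metis fv.span_minimal fv.subspace_span)
  qed
  have ind: "fv.independent (insert (dl t) B)"
    using B(2) t(2) spB fv.span_superset[of B] by (subst fv.independent_insert) auto
  have sub: "insert (dl t) B \<subseteq> fv.span (G ` B)"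
  proof
    fix v assume "v \<in> insert (dl t) B"
    then consider "v = dl t" | "v \<in> B" by blast
    then show "v \<in> fv.span (G ` B)"
    proof cases
      case 1
      then have "v = rr a0" by (simp add: rr_def)
      then show ?thesis using rows_in[OF a0(1)] GZ by blast
    next
      case 2
      then obtain a where "a \<in> R" "v = w a" using B(1) by (auto simp: Z_def)
      then have "v = rr a" "a < d" by (auto simp: rr_def R_def)
      then show ?thesis using rows_in GZ by blast
    qed
  qed
  have "card (insert (dl t) B) \<le> card (G ` B)"
    using fv.independent_span_bound[OF _ ind sub] finB by auto
  also have "\<dots> \<le> card B" by (rule card_image_le[OF finB])
  finally show False
    using finB t(2) spB B fv.span_superset by (metis card_insert_disjoint in_mono not_less_eq_eq order_refl)
qed



interpretation fvp: vector_space_pair "sc::complex \<Rightarrow> ('a\<Rightarrow>complex) \<Rightarrow> _" "sc::complex \<Rightarrow> ('b\<Rightarrow>complex) \<Rightarrow> _"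
  by (rule vector_space_pair.intro) (rule fv.vector_space_axioms)+

definition Sd :: "nat \<Rightarrow> (nat \<Rightarrow> complex) set" where
  "Sd n = {v. \<forall>s\<ge>n. v s = 0}"

definition ds0 :: "nat \<Rightarrow> nat \<Rightarrow> complex" where
  "ds0 b = (\<lambda>a. if a = b then 1 else 0)"

definition mv :: "nat \<Rightarrow> (nat \<Rightarrow> nat \<Rightarrow> complex) \<Rightarrow> (nat \<Rightarrow> complex) \<Rightarrow> (nat \<Rightarrow> complex)" where
  "mv n A v = (\<lambda>a. if a < n then (\<Sum>s<n. A a s * v s) else 0)"

lemma subspace_Sd: "fv.subspace (Sd n)"
  by (auto simp: fv.subspace_def Sd_def)

lemma mv_Sd: "mv n A v \<in> Sd n" by (simp add: mv_def Sd_def)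

lemma ds0_Sd: "b < n \<Longrightarrow> ds0 b \<in> Sd n" by (simp add: ds0_def Sd_def)

lemma inj_ds0: "inj ds0" by (auto simp: inj_on_def ds0_def fun_eq_iff)

lemma Sd_expand: assumes "v \<in> Sd n" shows "v = (\<Sum>b<n. sc (v b) (ds0 b))"
proof (rule ext)
  fix s
  have "(\<Sum>b<n. sc (v b) (ds0 b)) s = (\<Sum>b<n. if b = s then v b else 0)"
    unfolding sum_fun_apply by (rule sum.cong) (auto simp: ds0_def)
  also have "\<dots> = v s" using assms by (auto simp: sum.delta Sd_def)
  finally show "v s = (\<Sum>b<n. sc (v b) (ds0 b)) s" by simp
qed

lemma Sd_span: "Sd n \<subseteq> fv.span (ds0 ` {..<n})"
proof
  fix v assume v: "v \<in> Sd n"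
  show "v \<in> fv.span (ds0 ` {..<n})"
    by (subst Sd_expand[OF v], rule fv.span_sum, rule fv.span_scale, rule fv.span_base) auto
qed

lemma indep_ds0: "fv.independent (ds0 ` {..<n})"
proof -
  have "u v = 0" if "v \<in> ds0 ` {..<n}" "(\<Sum>v\<in>ds0 ` {..<n}. sc (u v) v) = 0" for u v
  proof -
    from that obtain t where t: "t < n" "v = ds0 t" by auto
    have "(\<Sum>v\<in>ds0 ` {..<n}. sc (u v) v) t = (\<Sum>s<n. sc (u (ds0 s)) (ds0 s) t)"
      by (simp add: sum_fun_apply sum.reindex[OF inj_on_subset[OF inj_ds0]])
    also have "\<dots> = (\<Sum>s<n. if s = t then u (ds0 s) else 0)"
      by (rule sum.cong) (auto simp: ds0_def)
    also have "\<dots> = u (ds0 t)" using t(1) by (simp add: sum.delta')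
    finally have "(\<Sum>v\<in>ds0 ` {..<n}. sc (u v) v) t = u (ds0 t)" .
    then show ?thesis using that(2) t by simp
  qed
  then show ?thesis by (auto simp: fv.dependent_finite)
qed

lemma card_ds0: "card (ds0 ` {..<n}) = n"
  by (simp add: card_image[OF inj_on_subset[OF inj_ds0]])

lemma basis_card_Sd:
  assumes "B \<subseteq> Sd n" "fv.independent B" "Sd n \<subseteq> fv.span B"
  shows "finite B \<and> card B = n"
proof -
  have 1: "finite B \<and> card B \<le> n"
    using fv.independent_span_bound[OF finite_imageI[OF finite_lessThan] assms(2), of ds0 n]
      assms(1) Sd_span[of n] card_ds0[of n] by auto
  have "card (ds0 ` {..<n}) \<le> card B"
    using fv.independent_span_bound[OF _ indep_ds0] assms(3) ds0_Sd 1 by blast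
  then show ?thesis using 1 card_ds0[of n] by simp
qed

lemma mv_hom: "module_hom sc sc (mv n A)"
  unfolding module_hom_iff_linear Vector_Spaces.linear_iff
  by (auto simp: fv.vector_space_axioms mv_def fun_eq_iff sum_distrib_left distrib_left
     sum.distrib algebra_simps)

lemma hom_linear: "module_hom sc sc f \<Longrightarrow> Vector_Spaces.linear sc sc f"
  by (simp add: module_hom_iff_linear)

lemma inj_from_span:
  assumes hom: "module_hom sc sc h" and finX: "finite X" and sp: "fv.span X \<subseteq> fv.span (h ` X)"
  shows "inj_on h (fv.span X)"
proof -
  obtain B where B: "B \<subseteq> X" "fv.independent B" "X \<subseteq> fv.span B"
    using fv.maximal_independent_subset[of X] by blast
  have finB: "finite B" using B(1) finX finite_subset by blast
  have spB: "fv.span B = fv.span X"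
    using B by (metis fv.span_minimal fv.span_mono fv.subspace_span subset_antisym)
  have hX: "fv.span (h ` X) \<subseteq> fv.span (h ` B)"
  proof -
    have "h ` X \<subseteq> h ` fv.span B" using B(3) by blast
    also have "\<dots> = fv.span (h ` B)" using module_hom.span_image[OF hom] by simp
    finally show ?thesis by (metis fv.span_minimal fv.subspace_span)
  qed
  have BhB: "B \<subseteq> fv.span (h ` B)" using B(1) sp hX fv.span_superset[of X] by blast
  have c1: "card B \<le> card (h ` B)"
    using fv.independent_span_bound[OF _ B(2) BhB] finB by auto
  have injB: "inj_on h B"
    by (rule eq_card_imp_inj_on[OF finB]) (use c1 card_image_le[OF finB, of h] in linarith)
  have indhB: "fv.independent (h ` B)"
  proof (rule ccontr)
    assume "\<not> fv.independent (h ` B)"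
    then obtain x where x: "x \<in> h ` B" "x \<in> fv.span (h ` B - {x})"
      by (auto simp: fv.dependent_def)
    have "fv.span (h ` B - {x}) = fv.span (h ` B)"
      using x by (metis fv.span_redundant insert_Diff)
    then have "B \<subseteq> fv.span (h ` B - {x})" using BhB by simp
    then have "card B \<le> card (h ` B - {x})"
      using fv.independent_span_bound[OF _ B(2)] finB by auto
    also have "\<dots> = card (h ` B) - 1" using x(1) finB by simp
    also have "\<dots> \<le> card B - 1" using card_image_le[OF finB, of h] by simp
    finally show False using x(1) finB
      by (metis One_nat_def card_gt_0_iff diff_less empty_iff finite_imageI image_is_empty not_le zero_less_one)
  qed
  have "inj_on h (fv.span B)"
    by (rule module_hom.inj_on_span_independent_image[OF hom indhB injB])
  then show ?thesis using spB by simp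
qed

lemma ext_inv:
  assumes finX: "finite X" and XS: "X \<subseteq> Sd n" and inj: "inj_on (mv n A) (fv.span X)"
  shows "\<exists>M Minv. (\<forall>u\<in>fv.span X. mv n M u = mv n A u) \<and>
     (\<forall>a<n. \<forall>b<n. (\<Sum>s<n. Minv a s * M s b) = (if a = b then 1 else 0))"
proof -
  define f where "f = mv n A"
  have fhom: "module_hom sc sc f" unfolding f_def by (rule mv_hom)
  obtain B where B: "B \<subseteq> X" "fv.independent B" "X \<subseteq> fv.span B"
    using fv.maximal_independent_subset[of X] by blast
  have finB: "finite B" using B(1) finX finite_subset by blast
  have spB: "fv.span B = fv.span X"
    using B by (metis fv.span_minimal fv.span_mono fv.subspace_span subset_antisym)
  have BS: "B \<subseteq> Sd n" using B(1) XS by blast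
  obtain B' where B': "B \<subseteq> B'" "B' \<subseteq> Sd n" "fv.independent B'" "Sd n \<subseteq> fv.span B'"
    using fv.maximal_independent_subset_extend[OF BS B(2)] by blast
  have injf: "inj_on f (fv.span B)" using inj spB by (simp add: f_def)
  have injfB: "inj_on f B" using injf fv.span_superset inj_on_subset by blast
  have indfB: "fv.independent (f ` B)"
    by (rule module_hom.independent_injective_image[OF fhom B(2) injf])
  have fBS: "f ` B \<subseteq> Sd n" by (auto simp: f_def mv_Sd)
  obtain C' where C': "f ` B \<subseteq> C'" "C' \<subseteq> Sd n" "fv.independent C'" "Sd n \<subseteq> fv.span C'"
    using fv.maximal_independent_subset_extend[OF fBS indfB] by blast
  from basis_card_Sd[OF B'(2-4)] have finB': "finite B'" and cB': "card B' = n" by auto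
  from basis_card_Sd[OF C'(2-4)] have finC': "finite C'" and cC': "card C' = n" by auto
  have cfB: "card (f ` B) = card B" by (rule card_image[OF injfB])
  have "card (B' - B) = card (C' - f ` B)"
    using card_Diff_subset[OF finB B'(1)] card_Diff_subset[OF finite_imageI[OF finB] C'(1)] cB' cC' cfB
    by simp
  then obtain h1 where h1: "bij_betw h1 (B' - B) (C' - f ` B)"
    using finite_same_card_bij[of "B' - B" "C' - f ` B"] finB' finC' by blast
  define g0 where "g0 v = (if v \<in> B then f v else h1 v)" for v
  obtain g where glin: "Vector_Spaces.linear sc sc g" and gB': "\<And>x. x \<in> B' \<Longrightarrow> g x = g0 x"
    using fvp.linear_independent_extend[OF B'(3), of g0] by blast
  have ghom: "module_hom sc sc g" using glin by (simp add: module_hom_iff_linear)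
  have gimg: "g ` B' = C'"
  proof -
    have "g ` B' = g0 ` B' " using gB' by (auto simp: image_def)
    also have "\<dots> = f ` B \<union> h1 ` (B' - B)"
      using B'(1) by (auto simp: g0_def image_def)
    also have "\<dots> = C'" using h1 C'(1) by (auto simp: bij_betw_def)
    finally show ?thesis .
  qed
  have ginj: "inj_on g B'"
  proof (rule inj_onI)
    fix x y assume xy: "x \<in> B'" "y \<in> B'" "g x = g y"
    then have e: "g0 x = g0 y" using gB' by simp
    show "x = y"
    proof (cases "x \<in> B"; cases "y \<in> B")
      assume "x \<in> B" "y \<in> B" then show ?thesis using e injfB by (simp add: g0_def inj_on_def)
    next
      assume "x \<in> B" "y \<notin> B"
      then have "h1 y \<in> C' - f ` B" using h1 xy(2) by (auto simp: bij_betw_def)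
      then show ?thesis using e \<open>x \<in> B\<close> \<open>y \<notin> B\<close> imageI[of x B f] by (simp add: g0_def)
    next
      assume "x \<notin> B" "y \<in> B"
      then have "h1 x \<in> C' - f ` B" using h1 xy(1) by (auto simp: bij_betw_def)
      then show ?thesis using e \<open>x \<notin> B\<close> \<open>y \<in> B\<close> imageI[of y B f] by (simp add: g0_def)
    next
      assume "x \<notin> B" "y \<notin> B"
      then show ?thesis using e h1 xy(1,2) by (auto simp: g0_def bij_betw_def inj_on_def)
    qed
  qed
  have ginjsp: "inj_on g (fv.span B')"
    by (rule module_hom.inj_on_span_independent_image[OF ghom _ ginj]) (simp add: gimg C'(3))
  obtain k where klin: "Vector_Spaces.linear sc sc k" and kC': "\<And>y. y \<in> C' \<Longrightarrow> k y = inv_into B' g y"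
    using fvp.linear_independent_extend[OF C'(3), of "inv_into B' g"] by blast
  have kg: "k (g v) = v" if "v \<in> fv.span B'" for v
  proof -
    have "(k \<circ> g) v = id v"
    proof (rule fvp.linear_eq_on[OF _ _ that])
      show "Vector_Spaces.linear sc sc (k \<circ> g)" by (rule Vector_Spaces.linear_compose[OF glin klin])
      show "Vector_Spaces.linear sc sc id" by (rule fv.linear_id)
    next
      fix b assume b: "b \<in> B'"
      then have "g b \<in> C'" using gimg by blast
      then show "(k \<circ> g) b = id b" using kC' b ginj by (simp add: inv_into_f_f)
    qed
    then show ?thesis by simp
  qed
  have gS: "g v \<in> Sd n" if "v \<in> fv.span B'" for v
  proof -
    have "g v \<in> g ` fv.span B'" using that by blast
    also have "\<dots> = fv.span C'" using module_hom.span_image[OF ghom, of B'] gimg by simp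
    also have "\<dots> \<subseteq> Sd n" by (rule fv.span_minimal[OF C'(2) subspace_Sd])
    finally show ?thesis .
  qed
  have spS: "Sd n \<subseteq> fv.span B'" by (rule B'(4))
  define M where "M a b = g (ds0 b) a" for a b
  define Minv where "Minv a b = k (ds0 b) a" for a b
  have gmv: "mv n M v = g v" if "v \<in> Sd n" for v
  proof (rule ext)
    fix a
    have "g v = (\<Sum>b<n. sc (v b) (g (ds0 b)))"
      by (subst Sd_expand[OF that]) (simp add: module_hom.sum[OF ghom] module_hom.scale[OF ghom])
    then have "g v a = (\<Sum>b<n. v b * M a b)" by (simp add: sum_fun_apply M_def)
    moreover have "g v a = 0" if "\<not> a < n" using gS[of v] spS \<open>v \<in> Sd n\<close> that by (auto simp: Sd_def)
    ultimately show "mv n M v a = g v a" by (auto simp: mv_def mult.commute)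
  qed
  have P1: "\<forall>u\<in>fv.span X. mv n M u = mv n A u"
  proof
    fix u assume u: "u \<in> fv.span X"
    have uS: "u \<in> Sd n" using u fv.span_minimal[OF XS subspace_Sd] by blast
    have "g u = f u"
    proof (rule fvp.linear_eq_on[OF glin _ ])
      show "Vector_Spaces.linear sc sc f" using fhom by (simp add: module_hom_iff_linear)
      show "u \<in> fv.span B" using u spB by simp
    next
      fix b assume "b \<in> B" then show "g b = f b" using gB' B'(1) by (auto simp: g0_def)
    qed
    then show "mv n M u = mv n A u" using gmv[OF uS] by (simp add: f_def)
  qed
  have P2: "\<forall>a<n. \<forall>b<n. (\<Sum>s<n. Minv a s * M s b) = (if a = b then 1 else 0)"
  proof (intro allI impI)
    fix a b assume ab: "a < n" "b < n"
    have gb: "g (ds0 b) \<in> Sd n" using gS spS ds0_Sd[OF ab(2)] by blast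
    have "k (g (ds0 b)) = (\<Sum>s<n. sc (g (ds0 b) s) (k (ds0 s)))"
      by (subst Sd_expand[OF gb]) (simp add: module_hom.sum[OF module_hom_iff_linear[THEN iffD2, OF klin]]
          module_hom.scale[OF module_hom_iff_linear[THEN iffD2, OF klin]])
    then have "(\<Sum>s<n. Minv a s * M s b) = k (g (ds0 b)) a"
      by (simp add: sum_fun_apply M_def Minv_def mult.commute)
    also have "\<dots> = ds0 b a" using kg spS ds0_Sd[OF ab(2)] by auto
    finally show "(\<Sum>s<n. Minv a s * M s b) = (if a = b then 1 else 0)" by (simp add: ds0_def)
  qed
  show ?thesis using P1 P2 by blast
qed



definition I0 :: "nat list \<Rightarrow> nat \<Rightarrow> (nat \<Rightarrow> nat) set" where
  "I0 e j = {i \<in> idx e. i j = 0}"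

definition sl :: "nat list \<Rightarrow> nat \<Rightarrow> ((nat \<Rightarrow> nat) \<Rightarrow> complex) \<Rightarrow> (nat \<Rightarrow> nat) \<Rightarrow> (nat \<Rightarrow> complex)" where
  "sl e j T i = (\<lambda>s. if s < e!j then T (i(j:=s)) else 0)"

definition Qf :: "nat list \<Rightarrow> nat \<Rightarrow> (nat \<Rightarrow> nat \<Rightarrow> nat \<Rightarrow> complex) \<Rightarrow> (nat \<Rightarrow> nat) \<Rightarrow> (nat \<Rightarrow> nat) \<Rightarrow> complex" where
  "Qf e j L i i' = (\<Prod>l\<in>{..<length e} - {j}. L l (i l) (i' l))"

lemma finite_I0[simp]: "finite (I0 e j)" by (simp add: I0_def)

lemma idx_upd: "j < length e \<Longrightarrow> i \<in> idx e \<Longrightarrow> s < e!j \<Longrightarrow> i(j:=s) \<in> idx e"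
  by (auto simp: idx_def)

lemma I0_idx: "I0 e j \<subseteq> idx e" by (auto simp: I0_def)

lemma idx_split: assumes "j < length e"
  shows "idx e = (\<lambda>(i',s). i'(j:=s)) ` (I0 e j \<times> {..<e!j})"
proof (rule set_eqI, rule iffI)
  fix i assume i: "i \<in> idx e"
  then have "i j < e!j" using assms by (auto simp: idx_def)
  then have "i(j:=0) \<in> idx e" using idx_upd[OF assms i] by simp
  then have "(i(j:=0), i j) \<in> I0 e j \<times> {..<e!j}" using \<open>i j < e!j\<close> by (auto simp: I0_def)
  moreover have "i = (i(j:=0))(j := i j)" by simp
  ultimately show "i \<in> (\<lambda>(i',s). i'(j:=s)) ` (I0 e j \<times> {..<e!j})" by (metis (no_types, lifting) case_prod_conv image_eqI)
next
  fix i assume "i \<in> (\<lambda>(i',s). i'(j:=s)) ` (I0 e j \<times> {..<e!j})"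
  then show "i \<in> idx e" using idx_upd[OF assms] by (auto simp: I0_def)
qed

lemma inj_split: "inj_on (\<lambda>(i',s). i'(j:=s)) (I0 e j \<times> A)"
proof (rule inj_onI, clarsimp)
  fix i' s i'' s' assume a: "i' \<in> I0 e j" and b: "i'' \<in> I0 e j" and c: "i'(j := s) = i''(j := s')"
  have s: "s = s'" using fun_cong[OF c, of j] by simp
  have "i' = i''"
  proof (rule ext)
    fix x show "i' x = i'' x" using fun_cong[OF c, of x] a b by (cases "x = j") (auto simp: I0_def)
  qed
  then show "i' = i'' \<and> s = s'" using s by simp
qed

lemma prod_split_j:
  assumes "j < length e"
  shows "(\<Prod>l<length e. L l (i l) ((i'(j:=s)) l)) = L j (i j) s * Qf e j L i i'"
proof -
  have "(\<Prod>l<length e. L l (i l) ((i'(j:=s)) l)) = L j (i j) s * (\<Prod>l\<in>{..<length e} - {j}. L l (i l) ((i'(j:=s)) l))"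
    using assms by (subst prod.remove[of _ j]) auto
  also have "(\<Prod>l\<in>{..<length e} - {j}. L l (i l) ((i'(j:=s)) l)) = Qf e j L i i'"
    unfolding Qf_def by (rule prod.cong) auto
  finally show ?thesis .
qed

lemma al_decomp:
  assumes j: "j < length e" and i: "i \<in> idx e"
  shows "apply_local e L T i = (\<Sum>i'\<in>I0 e j. Qf e j L i i' * mv (e!j) (L j) (sl e j T i') (i j))"
proof -
  have ij: "i j < e!j" using i j by (auto simp: idx_def)
  have "apply_local e L T i = (\<Sum>i''\<in>idx e. (\<Prod>l<length e. L l (i l) (i'' l)) * T i'')"
    using i by (simp add: apply_local_in)
  also have "\<dots> = (\<Sum>p\<in>I0 e j \<times> {..<e!j}. (\<lambda>i''. (\<Prod>l<length e. L l (i l) (i'' l)) * T i'')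
        ((\<lambda>(i',s). i'(j:=s)) p))"
    unfolding idx_split[OF j] by (rule sum.reindex[OF inj_split, unfolded comp_def])
  also have "\<dots> = (\<Sum>i'\<in>I0 e j. \<Sum>s<e!j. (\<Prod>l<length e. L l (i l) ((i'(j:=s)) l)) * T (i'(j:=s)))"
    by (simp add: sum.cartesian_product case_prod_beta)
  also have "\<dots> = (\<Sum>i'\<in>I0 e j. \<Sum>s<e!j. Qf e j L i i' * (L j (i j) s * T (i'(j:=s))))"
    by (simp only: prod_split_j[OF j] mult.assoc mult.left_commute[of "L j (i j) _"])
  also have "\<dots> = (\<Sum>i'\<in>I0 e j. Qf e j L i i' * mv (e!j) (L j) (sl e j T i') (i j))"
    using ij by (simp add: mv_def sl_def sum_distrib_left)
  finally show ?thesis .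
qed

lemma Qf_upd: "Qf e j L (i(j:=s)) i' = Qf e j L i i'"
  unfolding Qf_def by (rule prod.cong) auto

lemma Qf_Lupd: "Qf e j (L(j:=M)) i i' = Qf e j L i i'"
  unfolding Qf_def by (rule prod.cong) auto

lemma sl_apply_local:
  assumes j: "j < length e" and i: "i \<in> idx e"
  shows "sl e j (apply_local e L T) i = (\<Sum>i'\<in>I0 e j. sc (Qf e j L i i') (mv (e!j) (L j) (sl e j T i')))"
proof (rule ext)
  fix s
  show "sl e j (apply_local e L T) i s = (\<Sum>i'\<in>I0 e j. sc (Qf e j L i i') (mv (e!j) (L j) (sl e j T i'))) s"
  proof (cases "s < e!j")
    case True
    have "sl e j (apply_local e L T) i s = apply_local e L T (i(j:=s))" using True by (simp add: sl_def)
    also have "\<dots> = (\<Sum>i'\<in>I0 e j. Qf e j L i i' * mv (e!j) (L j) (sl e j T i') s)"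
      using al_decomp[OF j idx_upd[OF j i True]] by (simp add: Qf_upd)
    finally show ?thesis by (simp add: sum_fun_apply)
  next
    case False then show ?thesis by (simp add: sl_def sum_fun_apply mv_def)
  qed
qed

lemma al_replace:
  assumes j: "j < length e" and eq: "\<And>i'. i' \<in> I0 e j \<Longrightarrow> mv (e!j) M (sl e j T i') = mv (e!j) (L j) (sl e j T i')"
  shows "apply_local e (L(j:=M)) T = apply_local e L T"
proof (rule ext)
  fix i show "apply_local e (L(j:=M)) T i = apply_local e L T i"
  proof (cases "i \<in> idx e")
    case True
    show ?thesis unfolding al_decomp[OF j True] by (rule sum.cong) (auto simp: Qf_Lupd eq)
  qed (simp add: apply_local_out)
qed

lemma SL_span:
  assumes j: "j < length e"
  shows "sl e j (apply_local e L T) ` I0 e j \<subseteq> fv.span (mv (e!j) (L j) ` sl e j T ` I0 e j)"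
proof
  fix v assume "v \<in> sl e j (apply_local e L T) ` I0 e j"
  then obtain i where i: "i \<in> I0 e j" "v = sl e j (apply_local e L T) i" by blast
  have "v = (\<Sum>i'\<in>I0 e j. sc (Qf e j L i i') (mv (e!j) (L j) (sl e j T i')))"
    using i sl_apply_local[OF j] I0_idx by blast
  also have "\<dots> \<in> fv.span (mv (e!j) (L j) ` sl e j T ` I0 e j)"
    by (intro fv.span_sum fv.span_scale fv.span_base) auto
  finally show "v \<in> fv.span (mv (e!j) (L j) ` sl e j T ` I0 e j)" .
qed

lemma party_inv:
  assumes j: "j < length e" and T': "T' = apply_local e L T" and T: "T = apply_local e L' T'"
  shows "\<exists>M Minv. (\<forall>a<e!j. \<forall>b<e!j. (\<Sum>s<e!j. Minv a s * M s b) = (if a = b then 1 else 0))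
      \<and> apply_local e (L(j:=M)) T = T'"
proof -
  define n where "n = e!j"
  define X where "X = sl e j T ` I0 e j"
  define Y where "Y = sl e j T' ` I0 e j"
  define f where "f = mv n (L j)"
  define g where "g = mv n (L' j)"
  have fhom: "module_hom sc sc f" unfolding f_def by (rule mv_hom)
  have ghom: "module_hom sc sc g" unfolding g_def by (rule mv_hom)
  have finX: "finite X" by (simp add: X_def)
  have XS: "X \<subseteq> Sd n" by (auto simp: X_def sl_def Sd_def n_def)
  have Y1: "Y \<subseteq> fv.span (f ` X)" unfolding Y_def X_def f_def n_def T' by (rule SL_span[OF j])
  have X1: "X \<subseteq> fv.span (g ` Y)"
    unfolding Y_def X_def g_def n_def by (subst (1) T) (rule SL_span[OF j])
  have "fv.span (g ` Y) \<subseteq> fv.span (g ` fv.span (f ` X))"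
    using Y1 by (intro fv.span_mono image_mono)
  also have "\<dots> = fv.span ((g \<circ> f) ` X)"
  proof -
    have "g ` fv.span (f ` X) = fv.span (g ` f ` X)" using module_hom.span_image[OF ghom] by simp
    then show ?thesis by (simp add: fv.span_span image_comp)
  qed
  finally have "X \<subseteq> fv.span ((g \<circ> f) ` X)" using X1 by blast
  then have "fv.span X \<subseteq> fv.span ((g \<circ> f) ` X)"
    by (metis fv.span_minimal fv.subspace_span)
  moreover have "module_hom sc sc (g \<circ> f)"
    using fhom ghom by (simp add: module_hom_iff_linear Vector_Spaces.linear_compose)
  ultimately have "inj_on (g \<circ> f) (fv.span X)" using inj_from_span finX by blast
  then have "inj_on (mv n (L j)) (fv.span X)" unfolding f_def by (rule inj_on_imageI2)
  from ext_inv[OF finX XS this] obtain M Minv where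
    M1: "\<forall>u\<in>fv.span X. mv n M u = mv n (L j) u" and
    M2: "\<forall>a<n. \<forall>b<n. (\<Sum>s<n. Minv a s * M s b) = (if a = b then 1 else 0)" by blast
  have "apply_local e (L(j:=M)) T = apply_local e L T"
  proof (rule al_replace[OF j])
    fix i' assume "i' \<in> I0 e j"
    then have "sl e j T i' \<in> fv.span X" by (auto simp: X_def intro: fv.span_base)
    then show "mv (e!j) M (sl e j T i') = mv (e!j) (L j) (sl e j T i')" using M1 by (simp add: n_def)
  qed
  then show ?thesis using M2 T' unfolding n_def by (intro exI[of _ M] exI[of _ Minv] conjI) simp_all
qed

lemma all_inv:
  assumes T': "T' = apply_local e L T" and T: "T = apply_local e L' T'"
  shows "\<exists>Lx. apply_local e Lx T = T' \<and> (\<forall>j<length e. \<exists>Minv. \<forall>a<e!j. \<forall>b<e!j.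
     (\<Sum>s<e!j. Minv a s * Lx j s b) = (if a = b then 1 else 0))"
proof -
  have "\<exists>Lx. apply_local e Lx T = T' \<and> (\<forall>j<min m (length e). \<exists>Minv. \<forall>a<e!j. \<forall>b<e!j.
     (\<Sum>s<e!j. Minv a s * Lx j s b) = (if a = b then 1 else 0))" for m
  proof (induction m)
    case 0 then show ?case using T' by auto
  next
    case (Suc m)
    then obtain Lx where L1: "apply_local e Lx T = T'"
      and L2: "\<forall>j<min m (length e). \<exists>Minv. \<forall>a<e!j. \<forall>b<e!j.
     (\<Sum>s<e!j. Minv a s * Lx j s b) = (if a = b then 1 else 0)" by blast
    show ?case
    proof (cases "m < length e")
      case True
      from party_inv[OF True L1[symmetric] T] obtain M Minv where
        M: "\<forall>a<e!m. \<forall>b<e!m. (\<Sum>s<e!m. Minv a s * M s b) = (if a = b then 1 else 0)"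
        and Mq: "apply_local e (Lx(m:=M)) T = T'" by blast
      show ?thesis
      proof (intro exI[of _ "Lx(m:=M)"] conjI allI impI)
        show "apply_local e (Lx(m:=M)) T = T'" by (rule Mq)
      next
        fix j assume jm: "j < min (Suc m) (length e)"
        show "\<exists>Minv. \<forall>a<e!j. \<forall>b<e!j. (\<Sum>s<e!j. Minv a s * (Lx(m:=M)) j s b) = (if a = b then 1 else 0)"
        proof (cases "j = m")
          case True then show ?thesis unfolding True using M by (intro exI[of _ Minv]) simp
        next
          case False
          then have "j < min m (length e)" using jm by auto
          then show ?thesis using L2 False by auto
        qed
      qed
    next
      case False
      then have mm: "min (Suc m) (length e) = min m (length e)" by simp
      show ?thesis unfolding mm using L1 L2 by blast
    qed
  qed
  from this[of "length e"] show ?thesis by simp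
qed



lemma slocc_le_refl: "T \<in> tspace e \<Longrightarrow> slocc_le e T T"
  unfolding slocc_le_def using apply_local_idm by blast

lemma slocc_le_trans: "slocc_le e a b \<Longrightarrow> slocc_le e b c \<Longrightarrow> slocc_le e a c"
  unfolding slocc_le_def using apply_local_compose by metis

lemma slocc_le_tspace: "slocc_le e a b \<Longrightarrow> a \<in> tspace e"
  unfolding slocc_le_def by auto

lemma equiv_class_eq:
  assumes "(x, y) \<in> slocc_equiv e" shows "slocc_equiv e `` {x} = slocc_equiv e `` {y}"
  using assms unfolding slocc_equiv_def by (auto intro: slocc_le_trans)

definition chi_prop :: "nat \<Rightarrow> nat \<Rightarrow> nat list \<Rightarrow> ((nat \<Rightarrow> nat) \<Rightarrow> complex) \<Rightarrow> ((nat \<Rightarrow> nat) \<Rightarrow> complex) \<Rightarrow> bool" where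
  "chi_prop d k e phi chi \<longleftrightarrow> chi \<in> tspace (k#e) \<and> findep k (rw chi) \<and>
     (\<forall>a<d. \<forall>b<k. pr e (rw phi a) (rw chi b) = 0)"

lemma chi_exists:
  assumes "slocc_maximal (d#e) phi" "d + k = prod_list e"
  shows "\<exists>chi. chi_prop d k e phi chi"
proof -
  have phiT: "phi \<in> tspace (d#e)" using assms(1) by (simp add: slocc_maximal_def)
  have ind: "findep d (rw phi)" using max_findep[OF assms(1)] assms(2) by simp
  obtain x where x: "findep k x" "\<forall>b<k. x b \<in> tspace e" "\<forall>a<d. \<forall>b<k. pr e (rw phi a) (x b) = 0"
    using annih_exists[OF ind rw_tspace[OF phiT] assms(2)] by blast
  have r: "rw (mk k e x) b = x b" if "b < k" for b using rw_mk[OF that] x(2) that by simp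
  have "findep k (rw (mk k e x))"
    using x(1) r unfolding findep_def by (metis (no_types, lifting) lessThan_iff sum.cong)
  then show ?thesis using x r unfolding chi_prop_def by (intro exI[of _ "mk k e x"]) auto
qed

lemma key_step:
  assumes mphi: "slocc_maximal (d#e) phi" and mpsi: "slocc_maximal (d#e) psi"
    and dk: "d + k = prod_list e"
    and c1: "chi_prop d k e phi chi1" and c2: "chi_prop d k e psi chi2"
    and le1: "slocc_le (k#e) chi1 chi2" and le2: "slocc_le (k#e) chi2 chi1"
  shows "slocc_le (d#e) phi psi"
proof -
  have phiT: "phi \<in> tspace (d#e)" using mphi by (simp add: slocc_maximal_def)
  have psiT: "psi \<in> tspace (d#e)" using mpsi by (simp add: slocc_maximal_def)
  from le1 obtain L where L: "apply_local (k#e) L chi2 = chi1" by (auto simp: slocc_le_def)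
  from le2 obtain L' where L': "apply_local (k#e) L' chi1 = chi2" by (auto simp: slocc_le_def)
  from all_inv[OF L[symmetric] L'[symmetric]] obtain Lx where
    Lx1: "apply_local (k#e) Lx chi2 = chi1" and
    Lx2: "\<forall>j<length (k#e). \<exists>Minv. \<forall>a<(k#e)!j. \<forall>b<(k#e)!j.
       (\<Sum>s<(k#e)!j. Minv a s * Lx j s b) = (if a = b then 1 else 0)" by blast
  define G where "G = (\<lambda>j. Lx (Suc j))"
  have "\<forall>j. \<exists>Minv. j < length e \<longrightarrow> (\<forall>a<e!j. \<forall>b<e!j.
       (\<Sum>s<e!j. Minv a s * G j s b) = (if a = b then 1 else 0))"
  proof
    fix j show "\<exists>Minv. j < length e \<longrightarrow> (\<forall>a<e!j. \<forall>b<e!j.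
       (\<Sum>s<e!j. Minv a s * G j s b) = (if a = b then 1 else 0))"
      using Lx2[rule_format, of "Suc j"] by (auto simp: G_def)
  qed
  then obtain Mi where Mi: "\<And>j a b. j < length e \<Longrightarrow> a < e!j \<Longrightarrow> b < e!j \<Longrightarrow>
       (\<Sum>s<e!j. Mi j a s * G j s b) = (if a = b then 1 else 0)"
    by metis
  define H where "H j a b = Mi j b a" for j a b
  have tc: "apply_local e (tcmp e H G) = apply_local e idm"
    by (rule ext, rule apply_local_cong) (simp add: tcmp_def H_def Mi idm_def)
  have prHG: "pr e (apply_local e H v) (apply_local e G w) = pr e v w" if "w \<in> tspace e" for v w
    using that by (simp add: pr_apply_local tc apply_local_idm)
  have rows1: "rw chi1 b = (\<Sum>b'<k. sc (Lx 0 b b') (apply_local e G (rw chi2 b')))" if "b < k" for b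
    using row_apply_local[OF that, of e Lx chi2] Lx1 by (simp add: G_def)
  define y where "y a = apply_local e H (rw psi a)" for a
  have yT: "y a \<in> tspace e" for a by (simp add: y_def)
  have chi2T: "chi2 \<in> tspace (k#e)" using c2 by (simp add: chi_prop_def)
  have chi1T: "chi1 \<in> tspace (k#e)" using c1 by (simp add: chi_prop_def)
  have yx: "pr e (y a) (rw chi1 b) = 0" if "a < d" "b < k" for a b
  proof -
    have "pr e (y a) (rw chi1 b) = (\<Sum>b'<k. Lx 0 b b' * pr e (rw psi a) (rw chi2 b'))"
      using that(2) by (simp add: rows1 pr_sum_r y_def prHG rw_tspace[OF chi2T])
    also have "\<dots> = 0" using c2 that(1) by (simp add: chi_prop_def)
    finally show ?thesis .
  qed
  have psiI: "findep d (rw psi)" using max_findep[OF mpsi] dk by simp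
  have yI: "findep d y"
    unfolding findep_def
  proof (rule allI, rule impI)
    fix c assume c: "(\<Sum>a<d. sc (c a) (y a)) = 0"
    define v where "v = (\<Sum>a<d. sc (c a) (rw psi a))"
    have hom: "module_hom sc sc (apply_local e H)" by (rule al_hom)
    have "apply_local e H v = 0"
      using c by (simp add: v_def y_def module_hom.sum[OF hom] module_hom.scale[OF hom])
    have vT: "v \<in> tspace e" unfolding v_def by (intro tspace_sum tspace_sc rw_tspace[OF psiT])
    have "v = 0"
    proof (rule pr_nondeg[OF vT])
      fix w assume w: "w \<in> tspace e"
      have "pr e v w = pr e (apply_local e H v) (apply_local e G w)" using prHG[OF w] by simp
      also have "\<dots> = 0" using \<open>apply_local e H v = 0\<close> by simp
      finally show "pr e w v = 0" by (simp add: pr_comm)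
    qed
    then show "\<forall>a<d. c a = 0" using psiI unfolding findep_def v_def by blast
  qed
  have x1I: "findep k (rw chi1)" using c1 by (simp add: chi_prop_def)
  have inspan: "rw phi a \<in> fv.span (y ` {..<d})" if "a < d" for a
  proof (rule annspan[OF x1I _ yI _ _ dk])
    show "\<And>b. b < k \<Longrightarrow> rw chi1 b \<in> tspace e" using rw_tspace[OF chi1T] by blast
    show "\<And>a. a < d \<Longrightarrow> y a \<in> tspace e" using yT by blast
    show "\<And>a b. a < d \<Longrightarrow> b < k \<Longrightarrow> pr e (y a) (rw chi1 b) = 0" by (rule yx)
    show "rw phi a \<in> tspace e" by (rule rw_tspace[OF phiT])
    show "\<And>b. b < k \<Longrightarrow> pr e (rw phi a) (rw chi1 b) = 0" using c1 that by (simp add: chi_prop_def)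
  qed
  have "\<forall>a. \<exists>ca. a < d \<longrightarrow> rw phi a = (\<Sum>a'<d. sc (ca a') (y a'))"
    using inspan span_fam_explicit by blast
  then obtain C where C: "\<And>a. a < d \<Longrightarrow> rw phi a = (\<Sum>a'<d. sc (C a a') (y a'))" by metis
  show ?thesis
    by (rule le_rows2[of phi d e C H psi]) (use phiT C in \<open>simp_all add: y_def\<close>)
qed



theorem mainTheorem11:
  fixes K k d1 :: nat and ds :: "nat list"
  assumes "K \<ge> 3"
    and "length ds = K - 1"
    and "\<forall>d\<in>set ds. d \<ge> 2"
    and "k \<ge> 1"
    and "d1 = prod_list ds - k"
    and "d1 \<ge> 1"
    and "finitely_many_classes (k # ds)"
  shows "finitely_many_maximal_classes (d1 # ds)"
proof -
  have dk: "d1 + k = prod_list ds" using assms(5,6) by simp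
  define MX where "MX = {phi. slocc_maximal (d1#ds) phi}"
  define R1 where "R1 = slocc_equiv (d1#ds)"
  define Rk where "Rk = slocc_equiv (k#ds)"
  define chi where "chi phi = (SOME c. chi_prop d1 k ds phi c)" for phi
  have chi: "chi_prop d1 k ds phi (chi phi)" if "phi \<in> MX" for phi
  proof -
    have "\<exists>c. chi_prop d1 k ds phi c" using chi_exists[of d1 ds phi k] that dk by (simp add: MX_def)
    then show ?thesis unfolding chi_def by (rule someI_ex)
  qed
  define rep where "rep C = (SOME phi. phi \<in> MX \<and> C = R1 `` {phi})" for C
  have rep: "rep C \<in> MX \<and> C = R1 `` {rep C}" if "C \<in> MX // R1" for C
  proof -
    have "\<exists>phi. phi \<in> MX \<and> C = R1 `` {phi}" using that by (auto simp: quotient_def)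
    then show ?thesis unfolding rep_def by (rule someI_ex)
  qed
  define F where "F C = Rk `` {chi (rep C)}" for C
  have Fsub: "F ` (MX // R1) \<subseteq> tspace (k#ds) // Rk"
  proof
    fix X assume "X \<in> F ` (MX // R1)"
    then obtain C where C: "C \<in> MX // R1" "X = F C" by blast
    have "chi (rep C) \<in> tspace (k#ds)" using chi rep[OF C(1)] by (simp add: chi_prop_def)
    then show "X \<in> tspace (k#ds) // Rk" unfolding C(2) F_def by (rule quotientI)
  qed
  have injF: "inj_on F (MX // R1)"
  proof (rule inj_onI)
    fix C1 C2 assume C1: "C1 \<in> MX // R1" and C2: "C2 \<in> MX // R1" and eq: "F C1 = F C2"
    define p1 where "p1 = rep C1"
    define p2 where "p2 = rep C2"
    have p1: "p1 \<in> MX" "C1 = R1 `` {p1}" using rep[OF C1] by (auto simp: p1_def)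
    have p2: "p2 \<in> MX" "C2 = R1 `` {p2}" using rep[OF C2] by (auto simp: p2_def)
    have ch1: "chi_prop d1 k ds p1 (chi p1)" by (rule chi[OF p1(1)])
    have ch2: "chi_prop d1 k ds p2 (chi p2)" by (rule chi[OF p2(1)])
    have t2: "chi p2 \<in> tspace (k#ds)" using ch2 by (simp add: chi_prop_def)
    have "(chi p2, chi p2) \<in> Rk" using t2 slocc_le_refl by (simp add: Rk_def slocc_equiv_def)
    then have "chi p2 \<in> Rk `` {chi p1}" using eq unfolding F_def p1_def p2_def by simp
    then have "(chi p1, chi p2) \<in> Rk" by simp
    then have le1: "slocc_le (k#ds) (chi p1) (chi p2)" and le2: "slocc_le (k#ds) (chi p2) (chi p1)"
      by (auto simp: Rk_def slocc_equiv_def)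
    have m1: "slocc_maximal (d1#ds) p1" and m2: "slocc_maximal (d1#ds) p2" using p1 p2 by (auto simp: MX_def)
    have le12: "slocc_le (d1#ds) p1 p2" by (rule key_step[OF m1 m2 dk ch1 ch2 le1 le2])
    have p1T: "p1 \<in> tspace (d1#ds)" using m1 unfolding slocc_maximal_def by blast
    have p2T: "p2 \<in> tspace (d1#ds)" using m2 unfolding slocc_maximal_def by blast
    have le21: "slocc_le (d1#ds) p2 p1" using m1 p2T le12 unfolding slocc_maximal_def by blast
    have "(p1, p2) \<in> R1" using p1T p2T le12 le21 unfolding R1_def slocc_equiv_def by blast
    then have "R1 `` {p1} = R1 `` {p2}" unfolding R1_def by (rule equiv_class_eq)
    then show "C1 = C2" using p1(2) p2(2) by simp
  qed
  have "finite (tspace (k#ds) // Rk)" using assms(7) by (simp add: finitely_many_classes_def Rk_def)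
  then have "finite (F ` (MX // R1))" using Fsub finite_subset by blast
  then have "finite (MX // R1)" using injF finite_imageD by blast
  then show ?thesis by (simp add: finitely_many_maximal_classes_def MX_def R1_def)
qed


end
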